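(* Let $p$ be an odd prime, $\mathbb{F}$ a field of characteristic $p$, and $a,n$ natural numbers with $a<p\leq n$. Let $\ell$ be a natural number with $\ell p\leq an$. If $\ell=as$ for some natural number $s$, then $$H^{(a^n)}(R_{as})\cong H^{(a^{sp})}(R_{as})\boxtimes H^{(a^{n-sp})}$$ as $\mathbb{F}N_{S_{an}}(R_{as})$-modules, where $N_{S_{an}}(R_{as})= N_{S_{asp}}(R_{as})\times S_{a(n-sp)}$ with $S_{asp}$ acting on $\{1,\ldots,asp\}$ and $S_{a(n-sp)}$ acting on $\{asp+1,\ldots,an\}$ (the second factor module being identified with the Foulkes module on the set $\{asp+1,\ldots,an\}$). If $\ell$ is not an integer multiple of $a$, then $H^{(a^n)}(R_\ell)=0$.
   Context: For natural numbers $a,m$, $H^{(a^m)}$ is the $\mathbb{F}S_{am}$-permutation module with basis the set of set partitions of $\{1,\ldots,am\}$ into $m$ sets of size $a$, with the natural action. For $j\geq1$ let $z_j$ be the $p$-cycle $(p(j-1)+1,p(j-1)+2,\ldots,pj)$, and let $R_\ell$ be the cyclic subgroup of order $p$ generated by $z_1z_2\cdots z_\ell$. For an $\mathbb{F}G$-module $V$ and a $p$-subgroup $Q\leq G$, the Brauer quotient is $V(Q)=V^Q/\sum_{P<Q}\mathrm{Tr}_P^Q(V^P)$, where $V^P$ is the space of $P$-fixed vectors and $\mathrm{Tr}_P^Q(v)=\sum_{g}vg$ over right coset representatives $g$ of $P$ in $Q$; it is an $\mathbb{F}N_G(Q)$-module (on which $Q$ acts trivially). *)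

theory Defs
  imports "HOL-Algebra.Sym_Groups" "HOL-Combinatorics.Cycles" "HOL-Library.Disjoint_Sets" "HOL-Computational_Algebra.Primes"
begin

record ('v, 'a) fmod =
  mcar :: "'v set"
  mzero :: 'v
  madd :: "'v \<Rightarrow> 'v \<Rightarrow> 'v"
  msmult :: "'a \<Rightarrow> 'v \<Rightarrow> 'v"
  mact :: "(nat \<Rightarrow> nat) \<Rightarrow> 'v \<Rightarrow> 'v"

definition mod_iso :: "(nat \<Rightarrow> nat) set \<Rightarrow> ('v, 'a) fmod \<Rightarrow> ('w, 'a) fmod \<Rightarrow> bool" where
  "mod_iso G M M' \<longleftrightarrow> (\<exists>\<phi>. bij_betw \<phi> (mcar M) (mcar M')
      \<and> (\<forall>x\<in>mcar M. \<forall>y\<in>mcar M. \<phi> (madd M x y) = madd M' (\<phi> x) (\<phi> y))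
      \<and> (\<forall>c. \<forall>x\<in>mcar M. \<phi> (msmult M c x) = msmult M' c (\<phi> x))
      \<and> (\<forall>g\<in>G. \<forall>x\<in>mcar M. \<phi> (mact M g x) = mact M' g (\<phi> x)))"

definition zero_module :: "('v, 'a) fmod \<Rightarrow> bool" where
  "zero_module M \<longleftrightarrow> mcar M = {mzero M}"

definition sub_mod :: "('v, 'a) fmod \<Rightarrow> 'v set \<Rightarrow> ('v, 'a) fmod" where
  "sub_mod M S = M\<lparr>mcar := S\<rparr>"

definition mcoset :: "('v, 'a) fmod \<Rightarrow> 'v set \<Rightarrow> 'v \<Rightarrow> 'v set" where
  "mcoset M K v = (\<lambda>k. madd M v k) ` K"

definition quot_mod :: "('v, 'a) fmod \<Rightarrow> 'v set \<Rightarrow> ('v set, 'a) fmod" where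
  "quot_mod M K = \<lparr> mcar = mcoset M K ` mcar M,
     mzero = mcoset M K (mzero M),
     madd = (\<lambda>C D. mcoset M K (madd M (SOME v. v \<in> C) (SOME w. w \<in> D))),
     msmult = (\<lambda>c C. mcoset M K (msmult M c (SOME v. v \<in> C))),
     mact = (\<lambda>g C. mcoset M K (mact M g (SOME v. v \<in> C))) \<rparr>"

definition foulkes_basis :: "nat set \<Rightarrow> nat \<Rightarrow> nat set set set" where
  "foulkes_basis A a = {P. partition_on A P \<and> (\<forall>X\<in>P. card X = a)}"

definition pimg :: "(nat \<Rightarrow> nat) \<Rightarrow> nat set set \<Rightarrow> nat set set" where
  "pimg g P = (\<lambda>X. g ` X) ` P"

text \<open>The permutation module with basis foulkes_basis A a, elements = coefficient
  functions vanishing outside the basis; g sends basis element P to pimg g P.\<close>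
definition foulkes :: "nat set \<Rightarrow> nat \<Rightarrow> (nat set set \<Rightarrow> 'a::field, 'a) fmod" where
  "foulkes A a = \<lparr> mcar = {v. \<forall>P. P \<notin> foulkes_basis A a \<longrightarrow> v P = 0},
     mzero = (\<lambda>P. 0),
     madd = (\<lambda>v w P. v P + w P),
     msmult = (\<lambda>c v P. c * v P),
     mact = (\<lambda>g v P. v (pimg (inv_into UNIV g) P)) \<rparr>"

abbreviation H :: "nat \<Rightarrow> nat \<Rightarrow> (nat set set \<Rightarrow> 'a::field, 'a) fmod" where
  "H a m \<equiv> foulkes {1..a*m} a"

definition fixed_pts :: "('v, 'a) fmod \<Rightarrow> (nat \<Rightarrow> nat) set \<Rightarrow> 'v set" where
  "fixed_pts V P = {v \<in> mcar V. \<forall>g\<in>P. mact V g v = v}"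

text \<open>Cosets of P in Q (the cosets Pg in the right-action convention of the paper, i.e.
  the sets {g o h | h in P} for function composition).\<close>
definition pcosets :: "(nat \<Rightarrow> nat) set \<Rightarrow> (nat \<Rightarrow> nat) set \<Rightarrow> (nat \<Rightarrow> nat) set set" where
  "pcosets P Q = {(\<lambda>h. g \<circ> h) ` P | g. g \<in> Q}"

definition rtrace :: "('b \<Rightarrow> 'a::field, 'a) fmod \<Rightarrow> (nat \<Rightarrow> nat) set \<Rightarrow> (nat \<Rightarrow> nat) set
    \<Rightarrow> ('b \<Rightarrow> 'a) \<Rightarrow> ('b \<Rightarrow> 'a)" where
  "rtrace V P Q v = (\<lambda>x. \<Sum>C\<in>pcosets P Q. mact V (SOME g. g \<in> C) v x)"

text \<open>The sum over proper subgroups P < Q (of the symmetric group S_N) of Tr_P^Q(V^P).\<close>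
definition brauer_ker :: "nat \<Rightarrow> ('b \<Rightarrow> 'a::field, 'a) fmod \<Rightarrow> (nat \<Rightarrow> nat) set \<Rightarrow> ('b \<Rightarrow> 'a) set" where
  "brauer_ker N V Q = {v. \<exists>(k::nat) f. (\<forall>i<k. f i \<in> {rtrace V P Q w | P w.
        subgroup P (sym_group N) \<and> P \<subset> Q \<and> w \<in> fixed_pts V P})
      \<and> v = (\<lambda>x. \<Sum>i<k. f i x)}"

definition brauer_quot :: "nat \<Rightarrow> ('b \<Rightarrow> 'a::field, 'a) fmod \<Rightarrow> (nat \<Rightarrow> nat) set
    \<Rightarrow> (('b \<Rightarrow> 'a) set, 'a) fmod" where
  "brauer_quot N V Q = quot_mod (sub_mod V (fixed_pts V Q)) (brauer_ker N V Q)"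

text \<open>M \<boxtimes> H(A2,b), realised as functions from the basis of H(A2,b) to M
  (identifying m \<otimes> P with the function supported at P with value m).
  A permutation g acts on M (via its restriction) and on the basis of H(A2,b).\<close>
definition tensor_foulkes :: "('v, 'a) fmod \<Rightarrow> nat set \<Rightarrow> nat \<Rightarrow> (nat set set \<Rightarrow> 'v, 'a) fmod" where
  "tensor_foulkes M A2 b = (let B = foulkes_basis A2 b in
   \<lparr> mcar = {f. \<forall>P. (P \<in> B \<longrightarrow> f P \<in> mcar M) \<and> (P \<notin> B \<longrightarrow> f P = mzero M)},
     mzero = (\<lambda>P. mzero M),
     madd = (\<lambda>f f' P. if P \<in> B then madd M (f P) (f' P) else mzero M),
     msmult = (\<lambda>c f P. if P \<in> B then msmult M c (f P) else mzero M),
     mact = (\<lambda>g f P. if P \<in> B then mact M g (f (pimg (inv_into UNIV g) P)) else mzero M) \<rparr>)"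

definition zcyc :: "nat \<Rightarrow> nat \<Rightarrow> nat \<Rightarrow> nat" where
  "zcyc p j = cycle_of_list [p*(j-1)+1 ..< p*j+1]"

definition zprod :: "nat \<Rightarrow> nat \<Rightarrow> nat \<Rightarrow> nat" where
  "zprod p l = foldr (\<circ>) (map (zcyc p) [1..<l+1]) id"

definition Rgrp :: "nat \<Rightarrow> nat \<Rightarrow> (nat \<Rightarrow> nat) set" where
  "Rgrp p l = range (\<lambda>k. zprod p l ^^ k)"

definition normalizer_S :: "nat \<Rightarrow> (nat \<Rightarrow> nat) set \<Rightarrow> (nat \<Rightarrow> nat) set" where
  "normalizer_S N Q = {g. g permutes {1..N} \<and> (\<lambda>h. g \<circ> h \<circ> inv_into UNIV g) ` Q = Q}"

end

theory Submission
  imports Defs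
begin

lemma foldr_comp_shift: "foldr (\<circ>) xs g = foldr (\<circ>) xs id \<circ> (g::'b\<Rightarrow>'b)"
  by (induct xs) auto

lemma zprod_Suc: "zprod p (Suc l) = zprod p l \<circ> zcyc p (Suc l)"
  unfolding zprod_def
  by (simp add: foldr_comp_shift[of _ "zcyc p (Suc l)"])

lemma zprod_0: "zprod p 0 = id"
  by (simp add: zprod_def)

lemma zcyc_eval:
  assumes "p > 0" "j \<ge> 1"
  shows "zcyc p j x = (if p*(j-1) < x \<and> x \<le> p*j then p*(j-1) + ((x - 1) mod p + 1) mod p + 1 else x)"
proof -
  define cs where "cs = [p*(j-1)+1 ..< p*j+1]"
  have pj: "p*j = p*(j-1) + p" using assms by (cases j) auto
  have len: "length cs = p" unfolding cs_def using pj by simp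
  have dist: "distinct cs" unfolding cs_def by simp
  show ?thesis
  proof (cases "p*(j-1) < x \<and> x \<le> p*j")
    case True
    define i where "i = x - 1 - p*(j-1)"
    have i: "i < p" "x = p*(j-1) + 1 + i" using True pj unfolding i_def by auto
    define m where "m = p*(j-1)+1"
    have csm: "cs = [m..<m+p]" unfolding cs_def m_def using pj by simp
    have xi: "cs ! i = x" unfolding csm using i m_def by (simp del: upt_Suc)
    have "map (cycle_of_list cs) cs = rotate1 cs"
      using cyclic_rotation[OF dist, of 1] by simp
    hence "cycle_of_list cs (cs ! i) = rotate1 cs ! i"
      by (metis i(1) len nth_map)
    also have "\<dots> = cs ! (Suc i mod p)" using i len by (simp add: nth_rotate1)
    also have "\<dots> = p*(j-1) + 1 + Suc i mod p" unfolding csm using assms m_def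
      by (simp del: upt_Suc)
    finally have "zcyc p j x = p*(j-1) + 1 + Suc i mod p" using xi unfolding zcyc_def cs_def by simp
    moreover have "(x - 1) mod p = i" using i by (simp add: mult.commute)
    ultimately show ?thesis using True by simp
  next
    case False
    hence "x \<notin> set cs" unfolding cs_def by auto
    moreover have "zcyc p j = cycle_of_list cs" by (simp only: zcyc_def cs_def)
    ultimately show ?thesis using False id_outside_supp by metis
  qed
qed

definition zf :: "nat \<Rightarrow> nat \<Rightarrow> nat \<Rightarrow> nat" where
  "zf p l x = (if 1 \<le> x \<and> x \<le> l*p then p*((x-1) div p) + ((x-1) mod p + 1) mod p + 1 else x)"

lemma zprod_zf: assumes "p > 0" shows "zprod p l = zf p l"
proof (induct l)
  case 0 thus ?case by (auto simp: zprod_0 zf_def)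
next
  case (Suc l)
  show ?case
  proof
    fix x
    show "zprod p (Suc l) x = zf p (Suc l) x"
    proof (cases "l*p < x \<and> x \<le> Suc l * p")
      case True
      define i where "i = x - 1 - l*p"
      have i: "i < p" "x - 1 = l*p + i" using True unfolding i_def by auto
      have xm: "(x-1) div p = l" "(x-1) mod p = i" using i assms by simp_all
      have zc: "zcyc p (Suc l) x = p*l + (i+1) mod p + 1"
        using zcyc_eval[OF assms, of "Suc l" x] True xm by (simp add: mult.commute)
      have "(i+1) mod p < p" using assms by simp
      hence "zf p l (p*l + (i+1) mod p + 1) = p*l + (i+1) mod p + 1"
        unfolding zf_def by (simp add: mult.commute)
      hence "zprod p (Suc l) x = p*l + (i+1) mod p + 1"
        using zc Suc by (simp add: zprod_Suc)
      moreover have "zf p (Suc l) x = p*l + (i+1) mod p + 1"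
        unfolding zf_def using True xm by (auto simp: mult.commute)
      ultimately show ?thesis by simp
    next
      case False
      have "\<not>(p*(Suc l - 1) < x \<and> x \<le> p * Suc l)" using False by (simp add: mult.commute)
      hence zc: "zcyc p (Suc l) x = x"
        using zcyc_eval[OF assms, of "Suc l" x] by (metis if_not_P le_add1 plus_1_eq_Suc)
      have "zprod p (Suc l) x = zf p l x" using zc Suc by (simp add: zprod_Suc)
      moreover have "zf p l x = zf p (Suc l) x"
        unfolding zf_def using False by auto
      ultimately show ?thesis by simp
    qed
  qed
qed

lemma zf_pow:
  assumes "p > 0"
  shows "(zf p l ^^ k) x = (if 1 \<le> x \<and> x \<le> l*p then p*((x-1) div p) + ((x-1) mod p + k) mod p + 1 else x)"
proof (induct k)
  case 0
  show ?case
  proof (cases "1 \<le> x \<and> x \<le> l*p")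
    case True
    have "x - 1 = p*((x-1) div p) + (x-1) mod p" by simp
    thus ?thesis using True by simp
  qed simp
next
  case (Suc k)
  show ?case
  proof (cases "1 \<le> x \<and> x \<le> l*p")
    case True
    define q where "q = (x-1) div p"
    define y where "y = p*q + ((x-1) mod p + k) mod p + 1"
    have ql: "q < l" using True assms unfolding q_def
      by (metis Suc_le_eq diff_less div_less_iff_less_mult less_le_trans zero_less_one)
    have r: "((x-1) mod p + k) mod p < p" using assms by simp
    have "Suc q * p = p*q + p" by simp
    moreover have "Suc q \<le> l" using ql by simp
    hence "Suc q * p \<le> l * p" by (rule mult_le_mono1)
    ultimately have yS: "1 \<le> y \<and> y \<le> l*p" unfolding y_def using r by linarith
    have ydm: "(y-1) div p = q" "(y-1) mod p = ((x-1) mod p + k) mod p"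
      unfolding y_def using r by simp_all
    have "(zf p l ^^ Suc k) x = zf p l ((zf p l ^^ k) x)" by simp
    also have "(zf p l ^^ k) x = y" using Suc True unfolding y_def q_def by simp
    finally have "(zf p l ^^ Suc k) x = zf p l y" .
    also have "\<dots> = p*q + (((x-1) mod p + k) mod p + 1) mod p + 1"
      unfolding zf_def using yS ydm by simp
    also have "\<dots> = p*q + ((x-1) mod p + Suc k) mod p + 1"
      by (simp add: mod_Suc_eq)
    finally show ?thesis using True unfolding q_def by simp
  next
    case False
    have "(zf p l ^^ k) x = x" using Suc if_not_P[OF False] by metis
    moreover have "zf p l x = x" unfolding zf_def by (rule if_not_P[OF False])
    ultimately show ?thesis by (subst if_not_P[OF False]) simp
  qed
qed

abbreviation iv :: "('x \<Rightarrow> 'y) \<Rightarrow> 'y \<Rightarrow> 'x" where "iv f \<equiv> inv_into UNIV f"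


context
  fixes p l :: nat
  assumes pp: "prime p" and l1: "1 \<le> l"
begin

lemma mod_small2: "(m::nat) < p + p \<Longrightarrow> m mod p = (if m < p then m else m - p)"
proof (cases "m < p")
  case False
  assume "m < p + p"
  hence "m - p < p" using False by linarith
  thus ?thesis using False le_mod_geq[of p m] by simp
qed simp

lemma p1: "p > 1" using pp prime_gt_1_nat by blast

lemma zpow: "(zprod p l ^^ k) x = (if 1 \<le> x \<and> x \<le> l*p then p*((x-1) div p) + ((x-1) mod p + k) mod p + 1 else x)"
  using zprod_zf[of p l] zf_pow[where p=p and l=l and k=k and x=x] p1 by simp

lemma zpow_mod: "zprod p l ^^ k = zprod p l ^^ (k mod p)"
  by (rule ext) (simp add: zpow mod_add_right_eq)

lemma zpow_p: "zprod p l ^^ p = id"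
proof -
  have "zprod p l ^^ p = zprod p l ^^ (p mod p)" by (rule zpow_mod)
  thus ?thesis by simp
qed

lemma mod_inj2: "(r::nat) < p \<Longrightarrow> j < p \<Longrightarrow> k < p \<Longrightarrow> (r + j) mod p = (r + k) mod p \<Longrightarrow> j = k"
  using mod_small2[of "r+j"] mod_small2[of "r+k"] by (auto split: if_splits)

lemma zpow_inj:
  assumes "1 \<le> x" "x \<le> l*p" "j < p" "k < p" "(zprod p l ^^ j) x = (zprod p l ^^ k) x"
  shows "j = k"
proof -
  have "((x-1) mod p + j) mod p = ((x-1) mod p + k) mod p"
    using assms(5) assms(1,2) by (simp add: zpow)
  moreover have "(x-1) mod p < p" using p1 by simp
  ultimately show ?thesis using assms(3,4) mod_inj2 by blast
qed

lemma Q_eq: "Rgrp p l = (\<lambda>k. zprod p l ^^ k) ` {..<p}"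
proof -
  have "zprod p l ^^ k \<in> (\<lambda>k. zprod p l ^^ k) ` {..<p}" for k
  proof (rule image_eqI[where x="k mod p"])
    show "zprod p l ^^ k = (\<lambda>k. zprod p l ^^ k) (k mod p)" by (simp only: zpow_mod[of k])
    show "k mod p \<in> {..<p}" using p1 by simp
  qed
  thus ?thesis unfolding Rgrp_def by auto
qed

lemma lp1: "1 \<le> l*p" using l1 p1 by simp

lemma Q_inj: "inj_on (\<lambda>k. zprod p l ^^ k) {..<p}"
proof
  fix j k assume "j \<in> {..<p}" "k \<in> {..<p}" "zprod p l ^^ j = zprod p l ^^ k"
  thus "j = k" using zpow_inj[of 1 j k] lp1 by simp
qed

lemma card_Q: "card (Rgrp p l) = p"
  using Q_eq Q_inj by (simp add: card_image)

lemma finite_Q: "finite (Rgrp p l)"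
  using Q_eq by simp

lemma z_in_Q: "zprod p l \<in> Rgrp p l"
    unfolding Rgrp_def by (rule range_eqI[of _ _ 1]) simp

lemma z_ne_id: "zprod p l \<noteq> id"
proof
  assume "zprod p l = id"
  hence "(zprod p l ^^ 1) 1 = (zprod p l ^^ 0) 1" by simp
  thus False using zpow_inj[of 1 1 0] lp1 p1 by simp
qed

lemma Q_id: "id \<in> Rgrp p l"
  unfolding Rgrp_def by (rule range_eqI[of _ _ 0]) simp

lemma Q_comp: assumes "h \<in> Rgrp p l" "g \<in> Rgrp p l" shows "h \<circ> g \<in> Rgrp p l"
proof -
  obtain i j where "h = zprod p l ^^ i" "g = zprod p l ^^ j" using assms unfolding Rgrp_def by blast
  hence "h \<circ> g = zprod p l ^^ (i + j)" by (simp add: funpow_add)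
  thus ?thesis unfolding Rgrp_def by blast
qed

lemma Q_inv: assumes "h \<in> Rgrp p l"
  shows "iv h \<in> Rgrp p l" "h \<circ> iv h = id" "iv h \<circ> h = id"
proof -
  obtain k where k: "k < p" "h = zprod p l ^^ k" using assms Q_eq by auto
  define h' where "h' = zprod p l ^^ (p - k)"
  have 1: "h \<circ> h' = id" unfolding h'_def k(2) using k(1) zpow_p by (simp add: funpow_add[symmetric])
  have 2: "h' \<circ> h = id" unfolding h'_def k(2) using k(1) zpow_p by (simp add: funpow_add[symmetric])
  have "iv h = h'" using inv_unique_comp[OF 1 2] .
  moreover have "h' \<in> Rgrp p l" unfolding h'_def Rgrp_def by simp
  ultimately show "iv h \<in> Rgrp p l" "h \<circ> iv h = id" "iv h \<circ> h = id" using 1 2 by auto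
qed

lemma Q_bij: "h \<in> Rgrp p l \<Longrightarrow> bij h"
  using Q_inv o_bij by metis

lemma Q_out: "h \<in> Rgrp p l \<Longrightarrow> x \<notin> {1..l*p} \<Longrightarrow> h x = x"
  using Q_eq zpow by auto

lemma Q_in: assumes "h \<in> Rgrp p l" "x \<in> {1..l*p}" shows "h x \<in> {1..l*p}"
proof -
  obtain k where k: "h = zprod p l ^^ k" using assms Q_eq by auto
  define q where "q = (x-1) div p"
  have "x - 1 < l * p" using assms(2) by auto
  hence ql: "q < l" using p1 unfolding q_def by (simp add: div_less_iff_less_mult)
  have r: "((x-1) mod p + k) mod p < p" using p1 by simp
  have "Suc q * p \<le> l * p" using ql by (intro mult_le_mono1) simp
  hence B: "p*q + p \<le> l*p" by (simp add: mult.commute)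
  have A: "p*q + ((x-1) mod p + k) mod p + 1 \<le> p*q + p" using r by simp
  have "p*q + ((x-1) mod p + k) mod p + 1 \<le> l*p" using le_trans[OF A B] .
  thus ?thesis using assms(2) unfolding k by (simp add: zpow q_def)
qed

lemma Q_permutes: assumes "h \<in> Rgrp p l" shows "h permutes {1..l*p}"
proof (rule bij_imp_permutes)
  show "bij_betw h {1..l*p} {1..l*p}"
  proof -
    have "inj_on h {1..l*p}" using Q_bij[OF assms] by (metis bij_is_inj inj_on_subset subset_UNIV)
    moreover have "h ` {1..l*p} = {1..l*p}"
    proof
      show "h ` {1..l*p} \<subseteq> {1..l*p}" using Q_in[OF assms] by auto
      show "{1..l*p} \<subseteq> h ` {1..l*p}"
      proof
        fix y assume y: "y \<in> {1..l*p}"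
        have "iv h y \<in> {1..l*p}" using Q_in[OF Q_inv(1)[OF assms] y] .
        moreover have "h (iv h y) = y" using Q_inv(2)[OF assms] by (metis comp_apply id_apply)
        ultimately show "y \<in> h ` {1..l*p}" by (metis imageI)
      qed
    qed
    ultimately show ?thesis by (simp add: bij_betw_def)
  qed
  show "\<And>x. x \<notin> {1..l*p} \<Longrightarrow> h x = x" using Q_out[OF assms] .
qed

lemma Q_gen:
  assumes "HH \<subseteq> Rgrp p l" "id \<in> HH" "\<And>a b. a \<in> HH \<Longrightarrow> b \<in> HH \<Longrightarrow> a \<circ> b \<in> HH"
    "h \<in> HH" "h \<noteq> id"
  shows "HH = Rgrp p l"
proof -
  obtain k where k: "k < p" "h = zprod p l ^^ k" using assms(1,4) Q_eq by auto
  have k0: "k \<noteq> 0" using k assms(5) by auto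
  have "\<not> p dvd k" using k k0 by (auto dest: dvd_imp_le)
  hence cop: "coprime k p" using pp prime_imp_coprime coprime_commute by blast
  obtain x y where xy: "k * x = p * y + gcd k p" using bezout_nat[OF k0] by blast
  hence "(k*x) mod p = (1 + p*y) mod p" using cop by simp
  hence xy1: "(k*x) mod p = 1" using p1 by (simp add: Suc_times_mod_eq)
  have pw: "h ^^ m \<in> HH" for m
  proof (induct m)
    case 0 thus ?case using assms(2) by (simp only: funpow.simps(1))
  next
    case (Suc m)
    have "h ^^ Suc m = h \<circ> h ^^ m" by simp
    moreover have "h \<circ> h ^^ m \<in> HH" by (rule assms(3)[OF assms(4) Suc])
    ultimately show ?case by (simp only:)
  qed
  have "h ^^ x = zprod p l" unfolding k(2) funpow_mult
    using zpow_mod[of "k*x"] xy1 by simp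
  hence zH: "zprod p l \<in> HH" using pw by metis
  have "zprod p l ^^ m \<in> HH" for m
  proof (induct m)
    case 0 thus ?case using assms(2) by (simp only: funpow.simps(1))
  next
    case (Suc m)
    have "zprod p l ^^ Suc m = zprod p l \<circ> zprod p l ^^ m" by simp
    moreover have "zprod p l \<circ> zprod p l ^^ m \<in> HH" by (rule assms(3)[OF zH Suc])
    ultimately show ?case by (simp only:)
  qed
  hence "Rgrp p l \<subseteq> HH" unfolding Rgrp_def by auto
  thus ?thesis using assms(1) by auto
qed

end

lemma bij_iv: "bij g \<Longrightarrow> g \<circ> iv g = id \<and> iv g \<circ> g = id"
  by (metis bij_def inj_iff surj_iff)

lemma pimg_comp: "pimg (f \<circ> g) P = pimg f (pimg g P)"
  unfolding pimg_def by (simp add: image_comp)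

lemma pimg_id: "pimg id P = P"
  unfolding pimg_def by simp

lemma pimg_inv1: "bij g \<Longrightarrow> pimg g (pimg (iv g) P) = P"
  using bij_iv[of g] pimg_comp[of g "iv g" P] pimg_id by metis

lemma pimg_inv2: "bij g \<Longrightarrow> pimg (iv g) (pimg g P) = P"
  using bij_iv[of g] pimg_comp[of "iv g" g P] pimg_id by metis

lemma mcar_foulkes: "v \<in> mcar (foulkes A a) \<longleftrightarrow> (\<forall>P. P \<notin> foulkes_basis A a \<longrightarrow> v P = 0)"
  by (simp add: foulkes_def)

lemma basis_pimg:
  assumes g: "g permutes A" and P: "P \<in> foulkes_basis A a"
  shows "pimg g P \<in> foulkes_basis A a"
proof -
  have part: "partition_on A P" and cardP: "\<forall>X\<in>P. card X = a"
    using P unfolding foulkes_basis_def by auto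
  have inj: "inj_on g A" using permutes_inj_on[OF g] .
  have "partition_on (g ` A) ((`) g ` P - {{}})" using partition_on_inj_image[OF part inj] .
  moreover have "g ` A = A" using permutes_image[OF g] .
  moreover have "(`) g ` P - {{}} = pimg g P"
    using partition_onD3[OF part] unfolding pimg_def by auto
  ultimately have "partition_on A (pimg g P)" by simp
  moreover have "\<forall>X\<in>pimg g P. card X = a"
  proof
    fix Y assume "Y \<in> pimg g P"
    then obtain X where X: "X \<in> P" "Y = g ` X" unfolding pimg_def by auto
    have "inj_on g X" using permutes_inj[OF g] by (metis inj_on_subset subset_UNIV)
    thus "card Y = a" using X cardP by (simp add: card_image)
  qed
  ultimately show ?thesis unfolding foulkes_basis_def by simp
qed

lemma basis_pimg_iff:
  assumes g: "g permutes A"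
  shows "pimg g P \<in> foulkes_basis A a \<longleftrightarrow> P \<in> foulkes_basis A a"
proof
  assume "pimg g P \<in> foulkes_basis A a"
  hence "pimg (iv g) (pimg g P) \<in> foulkes_basis A a"
    using basis_pimg[OF permutes_inv[OF g]] by blast
  thus "P \<in> foulkes_basis A a" using pimg_inv2[OF permutes_bij[OF g]] by simp
qed (rule basis_pimg[OF g])

definition fixP :: "(nat \<Rightarrow> nat) set \<Rightarrow> nat set set \<Rightarrow> bool" where
  "fixP G P \<longleftrightarrow> (\<forall>h\<in>G. pimg h P = P)"

definition Kc :: "nat set \<Rightarrow> nat \<Rightarrow> (nat \<Rightarrow> nat) set \<Rightarrow> (nat set set \<Rightarrow> 'a::field) set" where
  "Kc A a G = {v \<in> fixed_pts (foulkes A a) G. \<forall>P. fixP G P \<longrightarrow> v P = 0}"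

definition tr :: "(nat \<Rightarrow> nat) set \<Rightarrow> (nat set set \<Rightarrow> 'a::field) \<Rightarrow> nat set set \<Rightarrow> 'a" where
  "tr G w x = (\<Sum>h\<in>G. w (pimg h x))"

context
  fixes p l N :: nat
  assumes pp: "prime p" and l1: "1 \<le> l" and lN: "l*p \<le> N"
begin

lemma QN: "h \<in> Rgrp p l \<Longrightarrow> h permutes {1..N}"
  using Q_permutes[OF pp l1] lN by (meson atLeastatMost_subset_iff le_refl permutes_subset)

lemma fixed_char:
  "(v::nat set set \<Rightarrow> 'a::field) \<in> fixed_pts (foulkes {1..N} a) (Rgrp p l) \<longleftrightarrow>
   v \<in> mcar (foulkes {1..N} a) \<and> (\<forall>h\<in>Rgrp p l. \<forall>P. v (pimg h P) = v P)"
proof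
  assume v: "v \<in> fixed_pts (foulkes {1..N} a) (Rgrp p l)"
  hence f: "\<forall>g\<in>Rgrp p l. (\<lambda>P. v (pimg (iv g) P)) = v" "v \<in> mcar (foulkes {1..N} a)"
    unfolding fixed_pts_def by (auto simp: foulkes_def)
  have "\<forall>h\<in>Rgrp p l. \<forall>P. v (pimg h P) = v P"
  proof (intro ballI allI)
    fix h P assume h: "h \<in> Rgrp p l"
    have "iv h \<in> Rgrp p l" using Q_inv(1)[OF pp l1 h] .
    hence "(\<lambda>P. v (pimg (iv (iv h)) P)) = v" using f(1) by blast
    moreover have "iv (iv h) = h" using inv_inv_eq[OF Q_bij[OF pp l1 h]] .
    ultimately show "v (pimg h P) = v P" by metis
  qed
  thus "v \<in> mcar (foulkes {1..N} a) \<and> (\<forall>h\<in>Rgrp p l. \<forall>P. v (pimg h P) = v P)"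
    using f(2) by simp
next
  assume "v \<in> mcar (foulkes {1..N} a) \<and> (\<forall>h\<in>Rgrp p l. \<forall>P. v (pimg h P) = v P)"
  hence v: "v \<in> mcar (foulkes {1..N} a)" "\<forall>h\<in>Rgrp p l. \<forall>P. v (pimg h P) = v P" by auto
  have "\<forall>g\<in>Rgrp p l. (\<lambda>P. v (pimg (iv g) P)) = v"
    using v(2) Q_inv(1)[OF pp l1] by auto
  thus "v \<in> fixed_pts (foulkes {1..N} a) (Rgrp p l)"
    using v(1) unfolding fixed_pts_def by (simp add: foulkes_def)
qed

lemma orb_inj:
  assumes "\<not> fixP (Rgrp p l) x"
  shows "inj_on (\<lambda>h. pimg h x) (Rgrp p l)"
proof
  define stab where "stab = {h \<in> Rgrp p l. pimg h x = x}"
  have stab_id: "stab \<subseteq> {id}"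
  proof
    fix h assume h: "h \<in> stab"
    show "h \<in> {id}"
    proof (rule ccontr)
      assume "h \<notin> {id}"
      have "stab = Rgrp p l"
      proof (rule Q_gen[OF pp l1])
        show "stab \<subseteq> Rgrp p l" unfolding stab_def by auto
        show "id \<in> stab" unfolding stab_def using Q_id[OF pp l1] pimg_id by auto
        show "\<And>a b. a \<in> stab \<Longrightarrow> b \<in> stab \<Longrightarrow> a \<circ> b \<in> stab"
          unfolding stab_def using Q_comp[OF pp l1] pimg_comp by auto
        show "h \<in> stab" using h .
        show "h \<noteq> id" using \<open>h \<notin> {id}\<close> by simp
      qed
      hence "fixP (Rgrp p l) x" unfolding fixP_def stab_def by auto
      thus False using assms by simp
    qed
  qed
  fix h1 h2 assume h: "h1 \<in> Rgrp p l" "h2 \<in> Rgrp p l" "pimg h1 x = pimg h2 x"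
  have "pimg (iv h2 \<circ> h1) x = x"
    using h(3) pimg_comp pimg_inv2[OF Q_bij[OF pp l1 h(2)]] by metis
  moreover have "iv h2 \<circ> h1 \<in> Rgrp p l" using Q_comp[OF pp l1 Q_inv(1)[OF pp l1 h(2)] h(1)] .
  ultimately have "iv h2 \<circ> h1 \<in> stab" unfolding stab_def by simp
  hence e: "iv h2 \<circ> h1 = id" using stab_id by auto
  have "h1 = (h2 \<circ> iv h2) \<circ> h1" using Q_inv(2)[OF pp l1 h(2)] by simp
  also have "\<dots> = h2 \<circ> (iv h2 \<circ> h1)" by (simp add: comp_assoc)
  finally show "h1 = h2" using e by simp
qed


lemma pcosets_id: "pcosets {id} G = (\<lambda>g. {g}) ` G"
  unfolding pcosets_def by auto

lemma tr_iv: "(\<Sum>g\<in>Rgrp p l. w (pimg (iv g) x)) = tr (Rgrp p l) w x"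
  unfolding tr_def
  by (rule sum.reindex_bij_witness[where i=iv and j=iv])
    (auto intro: Q_inv(1)[OF pp l1] simp: inv_inv_eq[OF Q_bij[OF pp l1]])

lemma rtrace_id: "rtrace (foulkes {1..N} a) {id} (Rgrp p l) w = tr (Rgrp p l) w"
proof
  fix x
  have "rtrace (foulkes {1..N} a) {id} (Rgrp p l) w x
      = (\<Sum>C\<in>(\<lambda>g. {g}) ` Rgrp p l. w (pimg (iv (SOME g. g \<in> C)) x))"
    unfolding rtrace_def pcosets_id by (simp add: foulkes_def)
  also have "\<dots> = (\<Sum>g\<in>Rgrp p l. w (pimg (iv g) x))"
    by (subst sum.reindex) (auto simp: inj_on_def)
  also have "\<dots> = tr (Rgrp p l) w x" by (rule tr_iv)
  finally show "rtrace (foulkes {1..N} a) {id} (Rgrp p l) w x = tr (Rgrp p l) w x" .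
qed

lemma tr_Kc:
  assumes ch: "CHAR('a::field) = p" and w: "(w::nat set set \<Rightarrow> 'a) \<in> mcar (foulkes {1..N} a)"
  shows "tr (Rgrp p l) w \<in> Kc {1..N} a (Rgrp p l)"
proof -
  have m: "tr (Rgrp p l) w \<in> mcar (foulkes {1..N} a)"
    unfolding mcar_foulkes
  proof (intro allI impI)
    fix P assume P: "P \<notin> foulkes_basis {1..N} a"
    have "\<forall>h\<in>Rgrp p l. w (pimg h P) = 0"
      using w P basis_pimg_iff[OF QN] unfolding mcar_foulkes by blast
    thus "tr (Rgrp p l) w P = 0" unfolding tr_def by simp
  qed
  have inv: "\<forall>g\<in>Rgrp p l. \<forall>P. tr (Rgrp p l) w (pimg g P) = tr (Rgrp p l) w P"
  proof (intro ballI allI)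
    fix g P assume g: "g \<in> Rgrp p l"
    show "tr (Rgrp p l) w (pimg g P) = tr (Rgrp p l) w P"
      unfolding tr_def
    proof (rule sum.reindex_bij_witness[where i="\<lambda>h. h \<circ> iv g" and j="\<lambda>h. h \<circ> g"])
      fix h assume h: "h \<in> Rgrp p l"
      show "h \<circ> g \<circ> iv g = h" using Q_inv(2)[OF pp l1 g] by (simp add: comp_assoc)
      show "h \<circ> g \<in> Rgrp p l" using Q_comp[OF pp l1 h g] .
      show "h \<circ> iv g \<circ> g = h" using Q_inv(3)[OF pp l1 g] by (simp add: comp_assoc)
      show "h \<circ> iv g \<in> Rgrp p l" using Q_comp[OF pp l1 h Q_inv(1)[OF pp l1 g]] .
      show "w (pimg (h \<circ> g) P) = w (pimg h (pimg g P))" by (simp add: pimg_comp)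
    qed
  qed
  have z: "\<forall>P. fixP (Rgrp p l) P \<longrightarrow> tr (Rgrp p l) w P = 0"
  proof (intro allI impI)
    fix P assume "fixP (Rgrp p l) P"
    hence "tr (Rgrp p l) w P = (\<Sum>h\<in>Rgrp p l. w P)" unfolding tr_def fixP_def by simp
    also have "\<dots> = of_nat p * w P" using card_Q[OF pp l1] by simp
    also have "\<dots> = 0" using ch by (metis mult_zero_left of_nat_CHAR)
    finally show "tr (Rgrp p l) w P = 0" .
  qed
  show ?thesis unfolding Kc_def using m inv z fixed_char by blast
qed

lemma Kc_tr:
  assumes v: "(v::nat set set \<Rightarrow> 'a::field) \<in> Kc {1..N} a (Rgrp p l)"
  shows "\<exists>w. w \<in> mcar (foulkes {1..N} a) \<and> v = tr (Rgrp p l) w"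
proof -
  have vm: "v \<in> mcar (foulkes {1..N} a)" and vi: "\<forall>h\<in>Rgrp p l. \<forall>P. v (pimg h P) = v P"
    and vz: "\<forall>P. fixP (Rgrp p l) P \<longrightarrow> v P = 0"
    using v fixed_char unfolding Kc_def by auto
  define orb where "orb x = (\<lambda>h. pimg h x) ` Rgrp p l" for x
  define rep where "rep x = (SOME y. y \<in> orb x)" for x
  have rep_in: "rep x \<in> orb x" for x
    unfolding rep_def orb_def using Q_id[OF pp l1] by (metis (no_types, lifting) imageI someI_ex)
  have orb_inv: "orb (pimg g x) = orb x" if g: "g \<in> Rgrp p l" for g x
  proof
    show "orb (pimg g x) \<subseteq> orb x"
      unfolding orb_def using Q_comp[OF pp l1 _ g] by (auto simp: pimg_comp[symmetric])
    show "orb x \<subseteq> orb (pimg g x)"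
    proof
      fix y assume "y \<in> orb x"
      then obtain h where h: "h \<in> Rgrp p l" "y = pimg h x" unfolding orb_def by auto
      have "pimg (h \<circ> iv g) (pimg g x) = pimg h x"
        using pimg_comp pimg_inv2[OF Q_bij[OF pp l1 g]] by metis
      moreover have "h \<circ> iv g \<in> Rgrp p l" using Q_comp[OF pp l1 h(1) Q_inv(1)[OF pp l1 g]] .
      ultimately show "y \<in> orb (pimg g x)" unfolding orb_def using h by (metis imageI)
    qed
  qed
  define w where "w y = (if y = rep y then v y else 0)" for y
  have wm: "w \<in> mcar (foulkes {1..N} a)" using vm unfolding mcar_foulkes w_def by simp
  have "v x = tr (Rgrp p l) w x" for x
  proof -
    have "tr (Rgrp p l) w x = (\<Sum>h\<in>Rgrp p l. if pimg h x = rep x then v x else 0)"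
      unfolding tr_def
    proof (rule sum.cong[OF refl])
      fix h assume h: "h \<in> Rgrp p l"
      have "rep (pimg h x) = rep x" unfolding rep_def using orb_inv[OF h] by simp
      moreover have "v (pimg h x) = v x" using vi h by blast
      ultimately show "w (pimg h x) = (if pimg h x = rep x then v x else 0)"
        unfolding w_def by auto
    qed
    also have "\<dots> = v x"
    proof (cases "fixP (Rgrp p l) x")
      case True
      hence "v x = 0" using vz by blast
      thus ?thesis using [[show_types, show_sorts]] by (simp only: mult_zero_left if_cancel sum.neutral_const)
    next
      case False
      obtain h0 where h0: "h0 \<in> Rgrp p l" "rep x = pimg h0 x" using rep_in[of x] unfolding orb_def by auto
      have "(\<Sum>h\<in>Rgrp p l. if pimg h x = rep x then v x else 0) = (\<Sum>h\<in>Rgrp p l. if h = h0 then v x else 0)"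
        using orb_inj[OF False] h0 by (intro sum.cong) (auto simp: inj_on_def)
      also have "\<dots> = v x" using h0(1) finite_Q[OF pp l1] by simp
      finally show ?thesis .
    qed
    finally show ?thesis by simp
  qed
  thus ?thesis using wm by blast
qed

lemma Kc_add: "v \<in> Kc A a G \<Longrightarrow> w \<in> Kc A a G \<Longrightarrow> (\<lambda>P. v P + w P) \<in> Kc A a G"
  unfolding Kc_def fixed_pts_def by (auto simp: foulkes_def fun_eq_iff)

lemma Kc_smult: "v \<in> Kc A a G \<Longrightarrow> (\<lambda>P. c * v P) \<in> Kc A a G"
  unfolding Kc_def fixed_pts_def by (auto simp: foulkes_def fun_eq_iff)

lemma Kc_zero: "(\<lambda>P. 0) \<in> Kc A a G"
  unfolding Kc_def fixed_pts_def by (auto simp: foulkes_def fun_eq_iff)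

lemma Kc_sum: "(\<And>i. i < (k::nat) \<Longrightarrow> f i \<in> Kc A a G) \<Longrightarrow> (\<lambda>x. \<Sum>i<k. f i x) \<in> Kc A a G"
proof (induct k)
  case 0 thus ?case using Kc_zero by simp
next
  case (Suc k)
  have "(\<lambda>x. \<Sum>i<Suc k. f i x) = (\<lambda>x. (\<Sum>i<k. f i x) + f k x)" by simp
  thus ?case using Kc_add[OF Suc(1) Suc(2)] Suc(2) by simp
qed

lemma sub_id:
  assumes "subgroup P (sym_group N)" "P \<subset> Rgrp p l"
  shows "P = {id}"
proof -
  have id: "id \<in> P" using subgroup.one_closed[OF assms(1)] by (simp add: sym_group_one)
  have cl: "\<And>a b. a \<in> P \<Longrightarrow> b \<in> P \<Longrightarrow> a \<circ> b \<in> P"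
    using subgroup.m_closed[OF assms(1)] by (simp add: sym_group_mult)
  have "h = id" if "h \<in> P" for h
  proof (rule ccontr)
    assume "h \<noteq> id"
    hence "P = Rgrp p l" using Q_gen[OF pp l1 _ id cl that] assms(2) by blast
    thus False using assms(2) by simp
  qed
  thus ?thesis using id by blast
qed

lemma bker:
  assumes ch: "CHAR('a::field) = p"
  shows "brauer_ker N (foulkes {1..N} a :: (nat set set \<Rightarrow> 'a, 'a) fmod) (Rgrp p l) = Kc {1..N} a (Rgrp p l)"
proof
  have fid: "fixed_pts (foulkes {1..N} a :: (nat set set \<Rightarrow> 'a, 'a) fmod) {id} = mcar (foulkes {1..N} a)"
    unfolding fixed_pts_def by (auto simp: foulkes_def pimg_id)
  show "brauer_ker N (foulkes {1..N} a :: (nat set set \<Rightarrow> 'a, 'a) fmod) (Rgrp p l) \<subseteq> Kc {1..N} a (Rgrp p l)"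
  proof
    fix v assume "v \<in> brauer_ker N (foulkes {1..N} a :: (nat set set \<Rightarrow> 'a, 'a) fmod) (Rgrp p l)"
    then obtain k :: nat and f where kf: "\<forall>i<k. f i \<in> {rtrace (foulkes {1..N} a) P (Rgrp p l) w | P w.
        subgroup P (sym_group N) \<and> P \<subset> Rgrp p l \<and> w \<in> fixed_pts (foulkes {1..N} a :: (nat set set \<Rightarrow> 'a, 'a) fmod) P}"
      "v = (\<lambda>x. \<Sum>i<k. f i x)"
      unfolding brauer_ker_def by blast
    have "f i \<in> Kc {1..N} a (Rgrp p l)" if ik: "i < k" for i
    proof -
      have "f i \<in> {rtrace (foulkes {1..N} a) P (Rgrp p l) w | P w.
        subgroup P (sym_group N) \<and> P \<subset> Rgrp p l \<and> w \<in> fixed_pts (foulkes {1..N} a :: (nat set set \<Rightarrow> 'a, 'a) fmod) P}"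
        using kf(1) ik by blast
      then obtain P w where Pw: "f i = rtrace (foulkes {1..N} a) P (Rgrp p l) w" "subgroup P (sym_group N)"
        "P \<subset> Rgrp p l" "w \<in> fixed_pts (foulkes {1..N} a :: (nat set set \<Rightarrow> 'a, 'a) fmod) P"
        by blast
      have "P = {id}" using sub_id Pw(2,3) by blast
      hence "f i = tr (Rgrp p l) w" using Pw(1) rtrace_id[of a w] by simp
      moreover have "w \<in> mcar (foulkes {1..N} a)" using Pw(4) \<open>P = {id}\<close> fid by simp
      ultimately show ?thesis using tr_Kc[OF ch] by simp
    qed
    thus "v \<in> Kc {1..N} a (Rgrp p l)" using kf(2) Kc_sum[of k f] by simp
  qed
  show "Kc {1..N} a (Rgrp p l) \<subseteq> brauer_ker N (foulkes {1..N} a :: (nat set set \<Rightarrow> 'a, 'a) fmod) (Rgrp p l)"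
  proof
    fix v :: "nat set set \<Rightarrow> 'a" assume "v \<in> Kc {1..N} a (Rgrp p l)"
    then obtain w where w: "w \<in> mcar (foulkes {1..N} a)" "v = tr (Rgrp p l) w" using Kc_tr by blast
    have sg: "subgroup {id} (sym_group N)"
      using group.triv_subgroup[OF sym_group_is_group] by (simp add: sym_group_one)
    have ss: "{id} \<subset> Rgrp p l" using Q_id[OF pp l1] z_in_Q[OF pp l1] z_ne_id[OF pp l1] by blast
    have "v \<in> {rtrace (foulkes {1..N} a) P (Rgrp p l) w | P w.
        subgroup P (sym_group N) \<and> P \<subset> Rgrp p l \<and> w \<in> fixed_pts (foulkes {1..N} a :: (nat set set \<Rightarrow> 'a, 'a) fmod) P}"
    proof -
      have "v = rtrace (foulkes {1..N} a) {id} (Rgrp p l) w" using rtrace_id[of a w] w(2) by simp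
      moreover have "w \<in> fixed_pts (foulkes {1..N} a :: (nat set set \<Rightarrow> 'a, 'a) fmod) {id}" using fid w(1) by simp
      ultimately show ?thesis using sg ss by blast
    qed
    moreover have "v = (\<lambda>x. \<Sum>i<(1::nat). (\<lambda>i. v) i x)" by simp
    ultimately show "v \<in> brauer_ker N (foulkes {1..N} a :: (nat set set \<Rightarrow> 'a, 'a) fmod) (Rgrp p l)"
      unfolding brauer_ker_def mem_Collect_eq
      by (intro exI[of _ "1::nat"] exI[of _ "\<lambda>i::nat. v"] conjI) auto
  qed
qed

end

definition subsp :: "('b \<Rightarrow> 'a::field) set \<Rightarrow> bool" where
  "subsp K \<longleftrightarrow> (\<lambda>P. 0) \<in> K \<and> (\<forall>v\<in>K. \<forall>w\<in>K. (\<lambda>P. v P + w P) \<in> K) \<and> (\<forall>v\<in>K. \<forall>c. (\<lambda>P. c * v P) \<in> K)"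

definition cs :: "('b \<Rightarrow> 'a::field) set \<Rightarrow> ('b \<Rightarrow> 'a) \<Rightarrow> ('b \<Rightarrow> 'a) set" where
  "cs K v = (\<lambda>k P. v P + k P) ` K"

lemma subsp_zero: "subsp K \<Longrightarrow> (\<lambda>P. 0) \<in> K"
  unfolding subsp_def by blast

lemma subsp_add: "subsp K \<Longrightarrow> v \<in> K \<Longrightarrow> w \<in> K \<Longrightarrow> (\<lambda>P. v P + w P) \<in> K"
  unfolding subsp_def by blast

lemma subsp_smult: "subsp K \<Longrightarrow> v \<in> K \<Longrightarrow> (\<lambda>P. c * v P) \<in> K"
  unfolding subsp_def by blast

lemma subsp_diff: "subsp K \<Longrightarrow> v \<in> K \<Longrightarrow> w \<in> K \<Longrightarrow> (\<lambda>P. v P - w P) \<in> K"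
proof -
  assume K: "subsp K" "v \<in> K" "w \<in> K"
  have "(\<lambda>P. v P + (-1) * w P) \<in> K" using subsp_add[OF K(1,2) subsp_smult[OF K(1,3)]] .
  thus ?thesis by simp
qed

lemma cs_memI: "k \<in> K \<Longrightarrow> x = (\<lambda>P. v P + k P) \<Longrightarrow> x \<in> cs K v"
  unfolding cs_def by (rule image_eqI[of _ _ k]) auto

lemma cs_memE: "u \<in> cs K v \<Longrightarrow> \<exists>k\<in>K. u = (\<lambda>P. v P + k P)"
  unfolding cs_def by blast

lemma mcoset_cs: "mcoset (sub_mod (foulkes A a) S) K v = cs K v"
  unfolding mcoset_def cs_def sub_mod_def by (simp add: foulkes_def)

lemma cs_self: "subsp K \<Longrightarrow> v \<in> cs K v"
  unfolding cs_def by (rule image_eqI[of _ _ "\<lambda>P. 0"]) (auto intro: subsp_zero)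

lemma cs_eq_iff:
  assumes K: "subsp K"
  shows "cs K v = cs K w \<longleftrightarrow> (\<lambda>P. v P - w P) \<in> K"
proof
  assume e: "cs K v = cs K w"
  have "w \<in> cs K v" using e cs_self[OF K] by simp
  then obtain k where k: "k \<in> K" "w = (\<lambda>P. v P + k P)" unfolding cs_def by auto
  have "(\<lambda>P. (-1) * k P) \<in> K" using subsp_smult[OF K k(1)] .
  moreover have "(\<lambda>P. v P - w P) = (\<lambda>P. (-1) * k P)" using k(2) by auto
  ultimately show "(\<lambda>P. v P - w P) \<in> K" by simp
next
  assume d: "(\<lambda>P. v P - w P) \<in> K"
  have dm: "(\<lambda>P. w P - v P) \<in> K" using subsp_diff[OF K subsp_zero[OF K] d] by simp
  show "cs K v = cs K w"
  proof
    show "cs K v \<subseteq> cs K w"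
    proof
      fix x assume "x \<in> cs K v"
      then obtain k where k: "k \<in> K" "x = (\<lambda>P. v P + k P)" unfolding cs_def by auto
      have "(\<lambda>P. (\<lambda>P. v P - w P) P + k P) \<in> K" using subsp_add[OF K d k(1)] .
      moreover have "x = (\<lambda>P. w P + (\<lambda>P. (\<lambda>P. v P - w P) P + k P) P)" using k(2) by (simp add: algebra_simps)
      ultimately show "x \<in> cs K w" by (rule cs_memI)
    qed
    show "cs K w \<subseteq> cs K v"
    proof
      fix x assume "x \<in> cs K w"
      then obtain k where k: "k \<in> K" "x = (\<lambda>P. w P + k P)" unfolding cs_def by auto
      have "(\<lambda>P. (\<lambda>P. w P - v P) P + k P) \<in> K" using subsp_add[OF K dm k(1)] .
      moreover have "x = (\<lambda>P. v P + (\<lambda>P. (\<lambda>P. w P - v P) P + k P) P)" using k(2) by (simp add: algebra_simps)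
      ultimately show "x \<in> cs K v" by (rule cs_memI)
    qed
  qed
qed

lemma cs_mem: assumes "subsp K" "u \<in> cs K v" shows "cs K u = cs K v"
proof -
  obtain k where k: "k \<in> K" "u = (\<lambda>P. v P + k P)" using assms(2) unfolding cs_def by auto
  have "(\<lambda>P. u P - v P) = k" using k(2) by auto
  thus ?thesis using cs_eq_iff[OF assms(1)] k(1) by simp
qed

lemma cs_some: "subsp K \<Longrightarrow> (SOME u. u \<in> cs K v) \<in> cs K v"
  using cs_self by (metis someI_ex)

lemma cs_in_S: assumes "subsp K" "subsp S" "K \<subseteq> S" "v \<in> S" "u \<in> cs K v" shows "u \<in> S"
proof -
  obtain k where "k \<in> K" "u = (\<lambda>P. v P + k P)" using assms(5) unfolding cs_def by auto
  thus ?thesis using subsp_add[OF assms(2) assms(4)] assms(3) by blast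
qed

lemma quot_mcar: "mcar (quot_mod (sub_mod (foulkes A a) S) K) = cs K ` S"
  unfolding quot_mod_def by (simp add: sub_mod_def mcoset_cs[unfolded sub_mod_def])

lemma quot_zero: "mzero (quot_mod (sub_mod (foulkes A a) S) K) = cs K (\<lambda>P. 0)"
  unfolding quot_mod_def using mcoset_cs[of A a S K] by (simp add: sub_mod_def foulkes_def)

lemma quot_madd: "madd (quot_mod (sub_mod (foulkes A a) S) K) C D
   = cs K (\<lambda>P. (SOME v. v \<in> C) P + (SOME w. w \<in> D) P)"
  unfolding quot_mod_def using mcoset_cs[of A a S K] by (simp add: sub_mod_def foulkes_def)

lemma quot_msmult: "msmult (quot_mod (sub_mod (foulkes A a) S) K) c C
   = cs K (\<lambda>P. c * (SOME v. v \<in> C) P)"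
  unfolding quot_mod_def using mcoset_cs[of A a S K] by (simp add: sub_mod_def foulkes_def)

lemma quot_mact: "mact (quot_mod (sub_mod (foulkes A a) S) K) g C
   = cs K (\<lambda>P. (SOME v. v \<in> C) (pimg (iv g) P))"
  unfolding quot_mod_def using mcoset_cs[of A a S K] by (simp add: sub_mod_def foulkes_def)

lemma quot_add:
  assumes K: "subsp K"
  shows "madd (quot_mod (sub_mod (foulkes A a) S) K) (cs K v) (cs K w) = cs K (\<lambda>P. v P + w P)"
proof -
  define v' where "v' = (SOME u. u \<in> cs K v)"
  define w' where "w' = (SOME u. u \<in> cs K w)"
  obtain k1 where k1: "k1 \<in> K" "v' = (\<lambda>P. v P + k1 P)" using cs_memE[OF cs_some[OF K, of v]] unfolding v'_def by blast
  obtain k2 where k2: "k2 \<in> K" "w' = (\<lambda>P. w P + k2 P)" using cs_memE[OF cs_some[OF K, of w]] unfolding w'_def by blast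
  have "(\<lambda>P. k1 P + k2 P) \<in> K" using subsp_add[OF K k1(1) k2(1)] .
  moreover have "(\<lambda>P. (v' P + w' P) - (v P + w P)) = (\<lambda>P. k1 P + k2 P)" unfolding k1(2) k2(2) by (rule ext) simp
  ultimately have "cs K (\<lambda>P. v' P + w' P) = cs K (\<lambda>P. v P + w P)" using cs_eq_iff[OF K] by simp
  thus ?thesis unfolding quot_madd v'_def w'_def .
qed

lemma quot_smult:
  assumes K: "subsp K"
  shows "msmult (quot_mod (sub_mod (foulkes A a) S) K) c (cs K v) = cs K (\<lambda>P. c * v P)"
proof -
  define v' where "v' = (SOME u. u \<in> cs K v)"
  obtain k1 where k1: "k1 \<in> K" "v' = (\<lambda>P. v P + k1 P)" using cs_memE[OF cs_some[OF K, of v]] unfolding v'_def by blast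
  have "(\<lambda>P. c * k1 P) \<in> K" using subsp_smult[OF K k1(1)] .
  moreover have "(\<lambda>P. c * v' P - c * v P) = (\<lambda>P. c * k1 P)" unfolding k1(2) by (rule ext) (simp add: algebra_simps)
  ultimately have "cs K (\<lambda>P. c * v' P) = cs K (\<lambda>P. c * v P)" using cs_eq_iff[OF K] by simp
  thus ?thesis unfolding quot_msmult v'_def .
qed

lemma quot_act:
  assumes K: "subsp K" and gK: "\<forall>k\<in>K. (\<lambda>P. k (pimg (iv g) P)) \<in> K"
  shows "mact (quot_mod (sub_mod (foulkes A a) S) K) g (cs K v) = cs K (\<lambda>P. v (pimg (iv g) P))"
proof -
  define v' where "v' = (SOME u. u \<in> cs K v)"
  obtain k1 where k1: "k1 \<in> K" "v' = (\<lambda>P. v P + k1 P)" using cs_memE[OF cs_some[OF K, of v]] unfolding v'_def by blast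
  have "(\<lambda>P. k1 (pimg (iv g) P)) \<in> K" using gK k1 by blast
  moreover have "(\<lambda>P. v' (pimg (iv g) P) - v (pimg (iv g) P)) = (\<lambda>P. k1 (pimg (iv g) P))" unfolding k1(2) by (rule ext) simp
  ultimately have "cs K (\<lambda>P. v' (pimg (iv g) P)) = cs K (\<lambda>P. v (pimg (iv g) P))" using cs_eq_iff[OF K] by simp
  thus ?thesis unfolding quot_mact v'_def .
qed

lemma quot_zero_module:
  assumes K: "subsp K" and SK: "S = K"
  shows "zero_module (quot_mod (sub_mod (foulkes A a) S) K)"
proof -
  have c: "cs K v = cs K (\<lambda>P. 0)" if "v \<in> K" for v using that cs_eq_iff[OF K, of v "\<lambda>P. 0"] by simp
  have z: "(\<lambda>P. 0) \<in> K" using subsp_zero[OF K] .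
  have "cs K ` S = {cs K (\<lambda>P. 0)}"
  proof
    show "cs K ` S \<subseteq> {cs K (\<lambda>P. 0)}" using c SK by blast
    show "{cs K (\<lambda>P. 0)} \<subseteq> cs K ` S" using z SK by blast
  qed
  thus ?thesis unfolding zero_module_def quot_mcar quot_zero .
qed

lemma quot_iso:
  fixes F :: "(nat set set \<Rightarrow> 'a::field) \<Rightarrow> 'w"
    and M' :: "('w, 'a) fmod"
  assumes K: "subsp K" and S: "subsp S" and KS: "K \<subseteq> S"
    and F_add: "\<And>v w. v \<in> S \<Longrightarrow> w \<in> S \<Longrightarrow> F (\<lambda>P. v P + w P) = madd M' (F v) (F w)"
    and F_smult: "\<And>v c. v \<in> S \<Longrightarrow> F (\<lambda>P. c * v P) = msmult M' c (F v)"
    and S_act: "\<And>g v. g \<in> G \<Longrightarrow> v \<in> S \<Longrightarrow> (\<lambda>P. v (pimg (iv g) P)) \<in> S"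
    and F_act: "\<And>g v. g \<in> G \<Longrightarrow> v \<in> S \<Longrightarrow> F (\<lambda>P. v (pimg (iv g) P)) = mact M' g (F v)"
    and F_surj: "F ` S = mcar M'"
    and F_ker: "\<And>v w. v \<in> S \<Longrightarrow> w \<in> S \<Longrightarrow> F v = F w \<longleftrightarrow> (\<lambda>P. v P - w P) \<in> K"
  shows "mod_iso G (quot_mod (sub_mod (foulkes A a) S) K) M'"
proof -
  define \<phi> where "\<phi> C = F (SOME v. v \<in> C)" for C
  have phi_cs: "\<phi> (cs K x) = F x" if x: "x \<in> S" for x
  proof -
    have u: "(SOME u. u \<in> cs K x) \<in> cs K x" by (rule cs_some[OF K])
    hence uS: "(SOME u. u \<in> cs K x) \<in> S" using cs_in_S[OF K S KS x] by blast
    have "cs K (SOME u. u \<in> cs K x) = cs K x" using cs_mem[OF K u] .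
    hence "(\<lambda>P. (SOME u. u \<in> cs K x) P - x P) \<in> K" using cs_eq_iff[OF K] by blast
    thus ?thesis unfolding \<phi>_def using F_ker[OF uS x] by simp
  qed
  have rep: "C = cs K (SOME v. v \<in> C) \<and> (SOME v. v \<in> C) \<in> S"
    if C: "C \<in> mcar (quot_mod (sub_mod (foulkes A a) S) K)" for C
  proof -
    obtain x where x: "x \<in> S" "C = cs K x" using C unfolding quot_mcar by auto
    have u: "(SOME u. u \<in> cs K x) \<in> cs K x" by (rule cs_some[OF K])
    show ?thesis using x cs_mem[OF K u] cs_in_S[OF K S KS x(1)] u by simp
  qed
  have bij: "bij_betw \<phi> (mcar (quot_mod (sub_mod (foulkes A a) S) K)) (mcar M')"
    unfolding bij_betw_def
  proof
    show "inj_on \<phi> (mcar (quot_mod (sub_mod (foulkes A a) S) K))"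
      unfolding quot_mcar
    proof
      fix C D assume "C \<in> cs K ` S" "D \<in> cs K ` S" "\<phi> C = \<phi> D"
      then obtain v w where vw: "v \<in> S" "w \<in> S" "C = cs K v" "D = cs K w" "\<phi> (cs K v) = \<phi> (cs K w)" by auto
      hence "F v = F w" using phi_cs by simp
      hence "(\<lambda>P. v P - w P) \<in> K" using F_ker vw by blast
      thus "C = D" using vw cs_eq_iff[OF K] by simp
    qed
    show "\<phi> ` mcar (quot_mod (sub_mod (foulkes A a) S) K) = mcar M'"
      unfolding quot_mcar F_surj[symmetric] using phi_cs by (auto simp: image_iff)
  qed
  have add: "\<forall>x\<in>mcar (quot_mod (sub_mod (foulkes A a) S) K). \<forall>y\<in>mcar (quot_mod (sub_mod (foulkes A a) S) K).
      \<phi> (madd (quot_mod (sub_mod (foulkes A a) S) K) x y) = madd M' (\<phi> x) (\<phi> y)"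
  proof (intro ballI)
    fix C D assume C: "C \<in> mcar (quot_mod (sub_mod (foulkes A a) S) K)" and D: "D \<in> mcar (quot_mod (sub_mod (foulkes A a) S) K)"
    define v where "v = (SOME v. v \<in> C)"
    define w where "w = (SOME v. v \<in> D)"
    have v: "C = cs K v" "v \<in> S" using rep[OF C] unfolding v_def by auto
    have w: "D = cs K w" "w \<in> S" using rep[OF D] unfolding w_def by auto
    have vw: "(\<lambda>P. v P + w P) \<in> S" using subsp_add[OF S v(2) w(2)] .
    have "\<phi> (madd (quot_mod (sub_mod (foulkes A a) S) K) C D) = \<phi> (cs K (\<lambda>P. v P + w P))"
      unfolding quot_madd v_def w_def ..
    also have "\<dots> = F (\<lambda>P. v P + w P)" using phi_cs[OF vw] .
    also have "\<dots> = madd M' (F v) (F w)" using F_add v w by blast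
    also have "\<dots> = madd M' (\<phi> C) (\<phi> D)" using v w phi_cs by simp
    finally show "\<phi> (madd (quot_mod (sub_mod (foulkes A a) S) K) C D) = madd M' (\<phi> C) (\<phi> D)" .
  qed
  have smult: "\<forall>c. \<forall>x\<in>mcar (quot_mod (sub_mod (foulkes A a) S) K).
      \<phi> (msmult (quot_mod (sub_mod (foulkes A a) S) K) c x) = msmult M' c (\<phi> x)"
  proof (intro allI ballI)
    fix c C assume C: "C \<in> mcar (quot_mod (sub_mod (foulkes A a) S) K)"
    define v where "v = (SOME v. v \<in> C)"
    have v: "C = cs K v" "v \<in> S" using rep[OF C] unfolding v_def by auto
    have cv: "(\<lambda>P. c * v P) \<in> S" using subsp_smult[OF S v(2)] .
    have "\<phi> (msmult (quot_mod (sub_mod (foulkes A a) S) K) c C) = \<phi> (cs K (\<lambda>P. c * v P))"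
      unfolding quot_msmult v_def ..
    also have "\<dots> = F (\<lambda>P. c * v P)" using phi_cs[OF cv] .
    also have "\<dots> = msmult M' c (F v)" using F_smult v by blast
    also have "\<dots> = msmult M' c (\<phi> C)" using v phi_cs by simp
    finally show "\<phi> (msmult (quot_mod (sub_mod (foulkes A a) S) K) c C) = msmult M' c (\<phi> C)" .
  qed
  have act: "\<forall>g\<in>G. \<forall>x\<in>mcar (quot_mod (sub_mod (foulkes A a) S) K).
      \<phi> (mact (quot_mod (sub_mod (foulkes A a) S) K) g x) = mact M' g (\<phi> x)"
  proof (intro ballI)
    fix g C assume g: "g \<in> G" and C: "C \<in> mcar (quot_mod (sub_mod (foulkes A a) S) K)"
    define v where "v = (SOME v. v \<in> C)"
    have v: "C = cs K v" "v \<in> S" using rep[OF C] unfolding v_def by auto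
    have gv: "(\<lambda>P. v (pimg (iv g) P)) \<in> S" using S_act[OF g v(2)] .
    have "\<phi> (mact (quot_mod (sub_mod (foulkes A a) S) K) g C) = \<phi> (cs K (\<lambda>P. v (pimg (iv g) P)))"
      unfolding quot_mact v_def ..
    also have "\<dots> = F (\<lambda>P. v (pimg (iv g) P))" using phi_cs[OF gv] .
    also have "\<dots> = mact M' g (F v)" using F_act g v by blast
    also have "\<dots> = mact M' g (\<phi> C)" using v phi_cs by simp
    finally show "\<phi> (mact (quot_mod (sub_mod (foulkes A a) S) K) g C) = mact M' g (\<phi> C)" .
  qed
  show ?thesis unfolding mod_iso_def using bij add smult act by blast
qed

context
  fixes p l N :: nat
  assumes pp: "prime p" and l1: "1 \<le> l" and lN: "l*p \<le> N"
begin

lemma z_moves: "x \<in> {1..l*p} \<Longrightarrow> zprod p l x \<noteq> x"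
  using zpow_inj[OF pp l1, of x 1 0] prime_gt_1_nat[OF pp] by auto

lemma norm_conj:
  assumes g: "g \<in> normalizer_S N (Rgrp p l)" and h: "h \<in> Rgrp p l"
  shows "g \<circ> h \<circ> iv g \<in> Rgrp p l" "iv g \<circ> h \<circ> g \<in> Rgrp p l"
proof -
  have gp: "g permutes {1..N}" and im: "(\<lambda>h. g \<circ> h \<circ> iv g) ` Rgrp p l = Rgrp p l"
    using g unfolding normalizer_S_def by auto
  show "g \<circ> h \<circ> iv g \<in> Rgrp p l" using im h by blast
  obtain h' where h': "h' \<in> Rgrp p l" "h = g \<circ> h' \<circ> iv g" using im h by force
  have "iv g \<circ> h \<circ> g = (iv g \<circ> g) \<circ> h' \<circ> (iv g \<circ> g)" unfolding h'(2) by (simp add: comp_assoc)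
  also have "\<dots> = h'" using permutes_inv_o(2)[OF gp] by simp
  finally show "iv g \<circ> h \<circ> g \<in> Rgrp p l" using h'(1) by simp
qed

lemma norm_S:
  assumes g: "g \<in> normalizer_S N (Rgrp p l)"
  shows "g ` {1..l*p} = {1..l*p}"
proof -
  have gp: "g permutes {1..N}" using g unfolding normalizer_S_def by auto
  define z' where "z' = g \<circ> zprod p l \<circ> iv g"
  have z'Q: "z' \<in> Rgrp p l" unfolding z'_def using norm_conj(1)[OF g z_in_Q[OF pp l1]] .
  have "g x \<in> {1..l*p}" if x: "x \<in> {1..l*p}" for x
  proof (rule ccontr)
    assume "g x \<notin> {1..l*p}"
    hence "z' (g x) = g x" using Q_out[OF pp l1 z'Q] by blast
    moreover have "z' (g x) = g (zprod p l x)" unfolding z'_def using permutes_inverses(2)[OF gp] by simp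
    ultimately have "zprod p l x = x" using permutes_inj[OF gp] by (metis injD)
    thus False using z_moves[OF x] by simp
  qed
  hence "g ` {1..l*p} \<subseteq> {1..l*p}" by blast
  thus ?thesis using endo_inj_surj[of "{1..l*p}" g] permutes_inj_on[OF gp] by simp
qed

lemma norm_C:
  assumes g: "g \<in> normalizer_S N (Rgrp p l)"
  shows "g ` {l*p<..N} = {l*p<..N}"
proof -
  have gp: "g permutes {1..N}" using g unfolding normalizer_S_def by auto
  have "{l*p<..N} = {1..N} - {1..l*p}" using lN by auto
  moreover have "g ` ({1..N} - {1..l*p}) = g ` {1..N} - g ` {1..l*p}"
    using permutes_inj[OF gp] by (simp add: image_set_diff)
  ultimately show ?thesis using permutes_image[OF gp] norm_S[OF g] by simp
qed

lemma iv_image: assumes "bij g" "g ` A = A" shows "iv g ` A = A"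
proof -
  have "iv g ` (g ` A) = A" using bij_iv[OF assms(1)] by (simp add: image_comp)
  thus ?thesis using assms(2) by simp
qed

lemma norm_eq:
  "normalizer_S N (Rgrp p l)
     = {g1 \<circ> g2 | g1 g2. g1 \<in> normalizer_S (l*p) (Rgrp p l) \<and> g2 permutes {l*p<..N}}"
proof
  show "normalizer_S N (Rgrp p l)
     \<subseteq> {g1 \<circ> g2 | g1 g2. g1 \<in> normalizer_S (l*p) (Rgrp p l) \<and> g2 permutes {l*p<..N}}"
  proof
    fix g assume g: "g \<in> normalizer_S N (Rgrp p l)"
    have gp: "g permutes {1..N}" and im: "(\<lambda>h. g \<circ> h \<circ> iv g) ` Rgrp p l = Rgrp p l"
      using g unfolding normalizer_S_def by auto
    have gS: "g ` {1..l*p} = {1..l*p}" using norm_S[OF g] .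
    have gC: "g ` {l*p<..N} = {l*p<..N}" using norm_C[OF g] .
    have ginj: "inj g" using permutes_inj[OF gp] .
    define g1 where "g1 x = (if x \<in> {1..l*p} then g x else x)" for x
    define g2 where "g2 x = (if x \<in> {1..l*p} then x else g x)" for x
    have comp: "g = g1 \<circ> g2"
    proof
      fix x
      show "g x = (g1 \<circ> g2) x"
      proof (cases "x \<in> {1..l*p}")
        case True thus ?thesis unfolding g1_def g2_def by simp
      next
        case False
        hence gx: "g x \<notin> {1..l*p}" using gS ginj by (metis inj_image_mem_iff)
        have "g2 x = g x" unfolding g2_def by (rule if_not_P[OF False])
        moreover have "g1 (g x) = g x" unfolding g1_def by (rule if_not_P[OF gx])
        ultimately show ?thesis by simp
      qed
    qed
    have g1p: "g1 permutes {1..l*p}"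
    proof (rule bij_imp_permutes)
      have "bij_betw g {1..l*p} {1..l*p}" using gS ginj by (simp add: bij_betw_def inj_on_subset[OF _ subset_UNIV])
      thus "bij_betw g1 {1..l*p} {1..l*p}" by (rule bij_betw_cong[THEN iffD1, rotated]) (simp add: g1_def)
      show "x \<notin> {1..l*p} \<Longrightarrow> g1 x = x" for x unfolding g1_def by (rule if_not_P)
    qed
    have g2p: "g2 permutes {l*p<..N}"
    proof (rule bij_imp_permutes)
      have "bij_betw g {l*p<..N} {l*p<..N}" using gC ginj by (simp add: bij_betw_def inj_on_subset[OF _ subset_UNIV])
      moreover have "\<And>x. x \<in> {l*p<..N} \<Longrightarrow> g x = g2 x" unfolding g2_def by auto
      ultimately show "bij_betw g2 {l*p<..N} {l*p<..N}" using bij_betw_cong by blast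
      show "x \<notin> {l*p<..N} \<Longrightarrow> g2 x = x" for x
        unfolding g2_def using permutes_not_in[OF gp, of x] by auto
    qed
    have conj: "g1 \<circ> h \<circ> iv g1 = g \<circ> h \<circ> iv g" if h: "h \<in> Rgrp p l" for h
    proof
      fix y
      have hS: "\<And>x. x \<in> {1..l*p} \<Longrightarrow> h x \<in> {1..l*p}" using Q_in[OF pp l1 h] by blast
      have hO: "\<And>x. x \<notin> {1..l*p} \<Longrightarrow> h x = x" using Q_out[OF pp l1 h] by blast
      show "(g1 \<circ> h \<circ> iv g1) y = (g \<circ> h \<circ> iv g) y"
      proof (cases "y \<in> {1..l*p}")
        case True
        have i1: "iv g1 y \<in> {1..l*p}" using permutes_in_image[OF permutes_inv[OF g1p]] True by simp
        have "g1 (iv g1 y) = y" using permutes_inverses(1)[OF g1p] .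
        hence "g (iv g1 y) = y" using i1 unfolding g1_def by simp
        hence e: "iv g1 y = iv g y" using permutes_inverses(2)[OF gp] by metis
        have "(g1 \<circ> h \<circ> iv g1) y = g (h (iv g1 y))" using hS[OF i1] unfolding g1_def by simp
        thus ?thesis using e by simp
      next
        case False
        have "iv g1 y = y" using permutes_not_in[OF permutes_inv[OF g1p]] False by simp
        moreover have "g1 y = y" unfolding g1_def by (rule if_not_P[OF False])
        ultimately have l: "(g1 \<circ> h \<circ> iv g1) y = y" using hO[OF False] by simp
        have "iv g y \<notin> {1..l*p}"
        proof
          assume "iv g y \<in> {1..l*p}"
          hence "g (iv g y) \<in> {1..l*p}" using gS by blast
          thus False using False permutes_inverses(1)[OF gp] by simp
        qed
        hence "(g \<circ> h \<circ> iv g) y = y" using hO permutes_inverses(1)[OF gp] by simp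
        thus ?thesis using l by simp
      qed
    qed
    have "(\<lambda>h. g1 \<circ> h \<circ> iv g1) ` Rgrp p l = (\<lambda>h. g \<circ> h \<circ> iv g) ` Rgrp p l"
      using conj by (intro image_cong) auto
    hence "g1 \<in> normalizer_S (l*p) (Rgrp p l)" unfolding normalizer_S_def using g1p im by simp
    thus "g \<in> {g1 \<circ> g2 | g1 g2. g1 \<in> normalizer_S (l*p) (Rgrp p l) \<and> g2 permutes {l*p<..N}}"
      using comp g2p by blast
  qed
  show "{g1 \<circ> g2 | g1 g2. g1 \<in> normalizer_S (l*p) (Rgrp p l) \<and> g2 permutes {l*p<..N}}
     \<subseteq> normalizer_S N (Rgrp p l)"
  proof
    fix g assume "g \<in> {g1 \<circ> g2 | g1 g2. g1 \<in> normalizer_S (l*p) (Rgrp p l) \<and> g2 permutes {l*p<..N}}"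
    then obtain g1 g2 where gg: "g = g1 \<circ> g2" "g1 \<in> normalizer_S (l*p) (Rgrp p l)" "g2 permutes {l*p<..N}" by blast
    have g1p: "g1 permutes {1..l*p}" and im: "(\<lambda>h. g1 \<circ> h \<circ> iv g1) ` Rgrp p l = Rgrp p l"
      using gg(2) unfolding normalizer_S_def by auto
    have g2p: "g2 permutes {l*p<..N}" using gg(3) .
    have "g1 permutes {1..N}" using permutes_subset[OF g1p] lN by auto
    moreover have "{l*p<..N} \<subseteq> {1..N}" by auto
    hence "g2 permutes {1..N}" using permutes_subset[OF g2p] by blast
    ultimately have gp: "g permutes {1..N}" unfolding gg(1) by (rule permutes_compose[rotated])
    have ivg: "iv (g1 \<circ> g2) = iv g2 \<circ> iv g1" using o_inv_distrib[OF permutes_bij[OF g1p] permutes_bij[OF g2p]] .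
    have c2: "g2 \<circ> h \<circ> iv g2 = h" if h: "h \<in> Rgrp p l" for h
    proof
      fix y
      have hS: "\<And>x. x \<in> {1..l*p} \<Longrightarrow> h x \<in> {1..l*p}" using Q_in[OF pp l1 h] by blast
      have hO: "\<And>x. x \<notin> {1..l*p} \<Longrightarrow> h x = x" using Q_out[OF pp l1 h] by blast
      have CS: "\<And>x. x \<in> {l*p<..N} \<Longrightarrow> x \<notin> {1..l*p}" by auto
      show "(g2 \<circ> h \<circ> iv g2) y = h y"
      proof (cases "y \<in> {1..l*p}")
        case True
        have yC: "y \<notin> {l*p<..N}" using True by auto
        have e1: "iv g2 y = y" using permutes_not_in[OF permutes_inv[OF g2p] yC] .
        have "h y \<notin> {l*p<..N}" using hS[OF True] by auto
        hence "g2 (h y) = h y" using permutes_not_in[OF g2p] by blast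
        thus ?thesis using e1 by simp
      next
        case False
        have nS: "iv g2 y \<notin> {1..l*p}"
        proof (cases "y \<in> {l*p<..N}")
          case True
          hence "iv g2 y \<in> {l*p<..N}" using permutes_in_image[OF permutes_inv[OF g2p]] by blast
          thus ?thesis using CS by blast
        next
          case False
          hence "iv g2 y = y" using permutes_not_in[OF permutes_inv[OF g2p]] by blast
          thus ?thesis using \<open>y \<notin> {1..l*p}\<close> by simp
        qed
        have "h (iv g2 y) = iv g2 y" using hO[OF nS] .
        hence "(g2 \<circ> h \<circ> iv g2) y = y" using permutes_inverses(1)[OF g2p] by simp
        thus ?thesis using hO[OF False] by simp
      qed
    qed
    have "g \<circ> h \<circ> iv g = g1 \<circ> h \<circ> iv g1" if h: "h \<in> Rgrp p l" for h
    proof -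
      have "g \<circ> h \<circ> iv g = g1 \<circ> (g2 \<circ> h \<circ> iv g2) \<circ> iv g1" unfolding gg(1) ivg by (simp add: comp_assoc)
      thus ?thesis using c2[OF h] by simp
    qed
    hence "(\<lambda>h. g \<circ> h \<circ> iv g) ` Rgrp p l = (\<lambda>h. g1 \<circ> h \<circ> iv g1) ` Rgrp p l"
      by (intro image_cong) auto
    thus "g \<in> normalizer_S N (Rgrp p l)" unfolding normalizer_S_def using gp im by simp
  qed
qed

end

lemma pimg_Un: "pimg g (P1 \<union> P2) = pimg g P1 \<union> pimg g P2"
  unfolding pimg_def by (simp add: image_Un)

lemma partition_on_Un:
  assumes "partition_on A P1" "partition_on B P2" "A \<inter> B = {}"
  shows "partition_on (A \<union> B) (P1 \<union> P2)"
proof (rule partition_onI)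
  show "\<Union>(P1 \<union> P2) = A \<union> B" using partition_onD1[OF assms(1)] partition_onD1[OF assms(2)] by auto
  show "{} \<notin> P1 \<union> P2" using partition_onD3[OF assms(1)] partition_onD3[OF assms(2)] by auto
  fix X Y assume XY: "X \<in> P1 \<union> P2" "Y \<in> P1 \<union> P2" "X \<noteq> Y"
  show "disjnt X Y"
  proof (cases "X \<in> P1")
    case True
    show ?thesis
    proof (cases "Y \<in> P1")
      case True
      thus ?thesis using \<open>X \<in> P1\<close> XY(3) partition_onD2[OF assms(1)] by (auto simp: pairwise_def)
    next
      case False
      hence "Y \<subseteq> B" using XY(2) partition_onD1[OF assms(2)] by auto
      moreover have "X \<subseteq> A" using True partition_onD1[OF assms(1)] by auto
      ultimately show ?thesis using assms(3) by (auto simp: disjnt_def)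
    qed
  next
    case False
    hence X2: "X \<in> P2" using XY(1) by simp
    show ?thesis
    proof (cases "Y \<in> P2")
      case True
      thus ?thesis using X2 XY(3) partition_onD2[OF assms(2)] by (auto simp: pairwise_def)
    next
      case False
      hence "Y \<subseteq> A" using XY(2) partition_onD1[OF assms(1)] by auto
      moreover have "X \<subseteq> B" using X2 partition_onD1[OF assms(2)] by auto
      ultimately show ?thesis using assms(3) by (auto simp: disjnt_def)
    qed
  qed
qed

lemma partition_on_filter:
  assumes P: "partition_on A P" and split: "\<forall>X\<in>P. X \<subseteq> B \<or> X \<inter> B = {}" and B: "B \<subseteq> A"
  shows "partition_on B {X\<in>P. X \<subseteq> B}"
proof (rule partition_onI)
  show "\<Union>{X\<in>P. X \<subseteq> B} = B"
  proof
    show "\<Union>{X\<in>P. X \<subseteq> B} \<subseteq> B" by auto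
    show "B \<subseteq> \<Union>{X\<in>P. X \<subseteq> B}"
    proof
      fix y assume y: "y \<in> B"
      then obtain X where X: "X \<in> P" "y \<in> X" using B partition_onD1[OF P] by auto
      hence "X \<subseteq> B" using split y by blast
      thus "y \<in> \<Union>{X\<in>P. X \<subseteq> B}" using X by auto
    qed
  qed
  show "{} \<notin> {X\<in>P. X \<subseteq> B}" using partition_onD3[OF P] by auto
  fix X Y assume "X \<in> {X\<in>P. X \<subseteq> B}" "Y \<in> {X\<in>P. X \<subseteq> B}" "X \<noteq> Y"
  thus "disjnt X Y" using partition_onD2[OF P] by (auto simp: pairwise_def)
qed

context
  fixes p l N :: nat
  assumes pp: "prime p" and l1: "1 \<le> l" and lN: "l*p \<le> N"
begin

lemma SC: "{1..l*p} \<inter> {l*p<..N} = {}" "{1..l*p} \<union> {l*p<..N} = {1..N}"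
  using lN by auto

lemma Q_C: "h \<in> Rgrp p l \<Longrightarrow> x \<in> {l*p<..N} \<Longrightarrow> h x = x"
  using Q_out[OF pp l1] by auto

lemma Q_memS: "h \<in> Rgrp p l \<Longrightarrow> h x \<in> {1..l*p} \<longleftrightarrow> x \<in> {1..l*p}"
  using permutes_in_image[OF Q_permutes[OF pp l1]] by blast

lemma Q_memC: assumes h: "h \<in> Rgrp p l" shows "h x \<in> {l*p<..N} \<longleftrightarrow> x \<in> {l*p<..N}"
proof (cases "x \<in> {1..l*p}")
  case True
  hence "h x \<in> {1..l*p}" using Q_memS[OF h] by blast
  thus ?thesis using True SC(1) by blast
next
  case False
  thus ?thesis using Q_out[OF pp l1 h False] by simp
qed

lemma Q_subS: "h \<in> Rgrp p l \<Longrightarrow> h ` X \<subseteq> {1..l*p} \<longleftrightarrow> X \<subseteq> {1..l*p}"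
  using Q_memS by blast

lemma Q_subC: "h \<in> Rgrp p l \<Longrightarrow> h ` X \<subseteq> {l*p<..N} \<longleftrightarrow> X \<subseteq> {l*p<..N}"
  using Q_memC by blast

lemma pimg_fixC: assumes h: "h \<in> Rgrp p l" and P2: "\<forall>X\<in>P2. X \<subseteq> {l*p<..N}"
  shows "pimg h P2 = P2"
proof -
  have "h ` X = X" if "X \<in> P2" for X
  proof -
    have "\<forall>x\<in>X. h x = x" using P2 that Q_C[OF h] by blast
    thus ?thesis by (simp add: image_cong)
  qed
  thus ?thesis unfolding pimg_def by simp
qed

lemma straddle:
  assumes P: "P \<in> foulkes_basis {1..N} a" and fx: "fixP (Rgrp p l) P" and ap: "a < p"
    and X: "X \<in> P"
  shows "X \<subseteq> {1..l*p} \<or> X \<subseteq> {l*p<..N}"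
proof (rule ccontr)
  assume nn: "\<not> (X \<subseteq> {1..l*p} \<or> X \<subseteq> {l*p<..N})"
  have part: "partition_on {1..N} P" and cX: "card X = a" using P X unfolding foulkes_basis_def by auto
  have XN: "X \<subseteq> {1..N}" using partition_onD1[OF part] X by auto
  obtain y' where y': "y' \<in> X" "y' \<notin> {1..l*p}" using nn by blast
  obtain y where y: "y \<in> X" "y \<notin> {l*p<..N}" using nn by blast
  have yS: "y \<in> {1..l*p}" using y XN SC by auto
  define z where "z = zprod p l"
  have zQ: "z \<in> Rgrp p l" unfolding z_def using z_in_Q[OF pp l1] .
  have "pimg z P = P" using fx zQ unfolding fixP_def by blast
  hence zX: "z ` X \<in> P" using X unfolding pimg_def by blast
  have "z y' = y'" using Q_out[OF pp l1 zQ y'(2)] .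
  hence "y' \<in> z ` X \<inter> X" using y'(1) by (metis IntI imageI)
  hence zXX: "z ` X = X" using partition_onD2[OF part] zX X unfolding disjoint_def by blast
  have pw: "(z ^^ k) y \<in> X" for k
  proof (induct k)
    case 0 thus ?case using y(1) by simp
  next
    case (Suc k)
    have "(z ^^ Suc k) y = z ((z ^^ k) y)" by simp
    thus ?case using Suc zXX by (metis imageI)
  qed
  have "inj_on (\<lambda>k. (z ^^ k) y) {..<p}"
  proof
    fix j k assume "j \<in> {..<p}" "k \<in> {..<p}" "(z ^^ j) y = (z ^^ k) y"
    thus "j = k" using zpow_inj[OF pp l1, of y j k] yS unfolding z_def by auto
  qed
  hence "card ((\<lambda>k. (z ^^ k) y) ` {..<p}) = p" by (simp add: card_image)
  moreover have "(\<lambda>k. (z ^^ k) y) ` {..<p} \<subseteq> X" using pw by blast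
  moreover have "finite X" using XN finite_subset by blast
  ultimately have "p \<le> card X" by (metis card_mono)
  thus False using cX ap by simp
qed

lemma split_union:
  assumes P1: "P1 \<in> foulkes_basis {1..l*p} a" and P2: "P2 \<in> foulkes_basis {l*p<..N} a"
  shows "P1 \<union> P2 \<in> foulkes_basis {1..N} a"
    "{X \<in> P1 \<union> P2. X \<subseteq> {1..l*p}} = P1"
    "{X \<in> P1 \<union> P2. X \<subseteq> {l*p<..N}} = P2"
proof -
  have p1: "partition_on {1..l*p} P1" "\<forall>X\<in>P1. card X = a" using P1 unfolding foulkes_basis_def by auto
  have p2: "partition_on {l*p<..N} P2" "\<forall>X\<in>P2. card X = a" using P2 unfolding foulkes_basis_def by auto
  have "partition_on ({1..l*p} \<union> {l*p<..N}) (P1 \<union> P2)" using partition_on_Un[OF p1(1) p2(1) SC(1)] .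
  thus "P1 \<union> P2 \<in> foulkes_basis {1..N} a" using p1(2) p2(2) SC(2) unfolding foulkes_basis_def by auto
  have s1: "\<And>X. X \<in> P1 \<Longrightarrow> X \<subseteq> {1..l*p}" using partition_onD1[OF p1(1)] by auto
  have s2: "\<And>X. X \<in> P2 \<Longrightarrow> X \<subseteq> {l*p<..N}" using partition_onD1[OF p2(1)] by auto
  have ne1: "\<And>X. X \<in> P1 \<Longrightarrow> X \<noteq> {}" using partition_onD3[OF p1(1)] by auto
  have ne2: "\<And>X. X \<in> P2 \<Longrightarrow> X \<noteq> {}" using partition_onD3[OF p2(1)] by auto
  have n12: "\<And>X. X \<in> P2 \<Longrightarrow> \<not> X \<subseteq> {1..l*p}" using s2 ne2 SC(1) by blast
  have n21: "\<And>X. X \<in> P1 \<Longrightarrow> \<not> X \<subseteq> {l*p<..N}" using s1 ne1 SC(1) by blast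
  show "{X \<in> P1 \<union> P2. X \<subseteq> {1..l*p}} = P1" using s1 n12 by blast
  show "{X \<in> P1 \<union> P2. X \<subseteq> {l*p<..N}} = P2" using s2 n21 by blast
qed

lemma split_decomp:
  assumes P: "P \<in> foulkes_basis {1..N} a" and sp: "\<forall>X\<in>P. X \<subseteq> {1..l*p} \<or> X \<subseteq> {l*p<..N}"
  shows "{X\<in>P. X \<subseteq> {1..l*p}} \<in> foulkes_basis {1..l*p} a"
    "{X\<in>P. X \<subseteq> {l*p<..N}} \<in> foulkes_basis {l*p<..N} a"
    "P = {X\<in>P. X \<subseteq> {1..l*p}} \<union> {X\<in>P. X \<subseteq> {l*p<..N}}"
proof -
  have part: "partition_on {1..N} P" and c: "\<forall>X\<in>P. card X = a" using P unfolding foulkes_basis_def by auto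
  have "\<forall>X\<in>P. X \<subseteq> {1..l*p} \<or> X \<inter> {1..l*p} = {}" using sp SC(1) by blast
  hence "partition_on {1..l*p} {X\<in>P. X \<subseteq> {1..l*p}}" using partition_on_filter[OF part] SC(2) by blast
  thus "{X\<in>P. X \<subseteq> {1..l*p}} \<in> foulkes_basis {1..l*p} a" using c unfolding foulkes_basis_def by auto
  have "\<forall>X\<in>P. X \<subseteq> {l*p<..N} \<or> X \<inter> {l*p<..N} = {}" using sp SC(1) by blast
  hence "partition_on {l*p<..N} {X\<in>P. X \<subseteq> {l*p<..N}}" using partition_on_filter[OF part] SC(2) by blast
  thus "{X\<in>P. X \<subseteq> {l*p<..N}} \<in> foulkes_basis {l*p<..N} a" using c unfolding foulkes_basis_def by auto
  show "P = {X\<in>P. X \<subseteq> {1..l*p}} \<union> {X\<in>P. X \<subseteq> {l*p<..N}}" using sp by blast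
qed

lemma a_dvd_l:
  assumes P: "P \<in> foulkes_basis {1..N} a" and fx: "fixP (Rgrp p l) P" and ap: "a < p" and a0: "0 < a"
  shows "a dvd l"
proof -
  have sp: "\<forall>X\<in>P. X \<subseteq> {1..l*p} \<or> X \<subseteq> {l*p<..N}" using straddle[OF P fx ap] by blast
  define P1 where "P1 = {X\<in>P. X \<subseteq> {1..l*p}}"
  have P1b: "P1 \<in> foulkes_basis {1..l*p} a" unfolding P1_def using split_decomp(1)[OF P sp] .
  hence part: "partition_on {1..l*p} P1" and c: "\<forall>X\<in>P1. card X = a" unfolding foulkes_basis_def by auto
  have fin: "\<And>X. X \<in> P1 \<Longrightarrow> finite X" using partition_onD1[OF part] by (metis Union_upper finite_atLeastAtMost finite_subset)
  have "card (\<Union>P1) = sum card P1" using card_Union_disjoint[OF partition_onD2[OF part] fin] .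
  hence "card (\<Union>P1) = card P1 * a" using c by simp
  moreover have "card (\<Union>P1) = l * p" using partition_onD1[OF part, symmetric] by simp
  ultimately have "l * p = a * card P1" by simp
  hence "a dvd l * p" by simp
  moreover have "coprime a p"
  proof -
    have "\<not> p dvd a" using ap a0 by (auto dest: dvd_imp_le)
    thus ?thesis using prime_imp_coprime[OF pp] coprime_commute by blast
  qed
  ultimately show ?thesis using coprime_dvd_mult_left_iff by blast
qed

end

lemma iv_image2: assumes "bij g" "g ` A = A" shows "iv g ` A = A"
proof -
  have "iv g ` (g ` A) = A" using bij_iv[OF assms(1)] by (simp add: image_comp)
  thus ?thesis using assms(2) by simp
qed

lemma basis_pimg_gen:
  assumes inj: "inj g" and gA: "g ` A = A" and P: "P \<in> foulkes_basis A a"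
  shows "pimg g P \<in> foulkes_basis A a"
proof -
  have part: "partition_on A P" and cardP: "\<forall>X\<in>P. card X = a"
    using P unfolding foulkes_basis_def by auto
  have "partition_on (g ` A) ((`) g ` P - {{}})"
    using partition_on_inj_image[OF part inj_on_subset[OF inj subset_UNIV]] .
  moreover have "(`) g ` P - {{}} = pimg g P"
    using partition_onD3[OF part] unfolding pimg_def by auto
  ultimately have "partition_on A (pimg g P)" using gA by simp
  moreover have "\<forall>X\<in>pimg g P. card X = a"
  proof
    fix Y assume "Y \<in> pimg g P"
    then obtain X where X: "X \<in> P" "Y = g ` X" unfolding pimg_def by auto
    have "inj_on g X" using inj_on_subset[OF inj subset_UNIV] .
    thus "card Y = a" using X cardP by (simp add: card_image)
  qed
  ultimately show ?thesis unfolding foulkes_basis_def by simp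
qed

lemma basis_pimg_gen_iff:
  assumes b: "bij g" and gA: "g ` A = A"
  shows "pimg g P \<in> foulkes_basis A a \<longleftrightarrow> P \<in> foulkes_basis A a"
proof
  assume "pimg g P \<in> foulkes_basis A a"
  moreover have "inj (iv g)" using b bij_imp_bij_inv bij_is_inj by blast
  moreover have "iv g ` A = A" using iv_image2[OF b gA] .
  ultimately have "pimg (iv g) (pimg g P) \<in> foulkes_basis A a"
    using basis_pimg_gen by blast
  thus "P \<in> foulkes_basis A a" using pimg_inv2[OF b] by simp
qed (rule basis_pimg_gen[OF bij_is_inj[OF b] gA])

lemma fixed_subsp: "subsp (fixed_pts (foulkes A a) G)"
  unfolding subsp_def fixed_pts_def by (auto simp: foulkes_def fun_eq_iff)

lemma Kc_sub: "Kc A a G \<subseteq> fixed_pts (foulkes A a) G"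
  unfolding Kc_def by auto

lemma tensor_mcar: "mcar (tensor_foulkes M A b) =
   {f. \<forall>P. (P \<in> foulkes_basis A b \<longrightarrow> f P \<in> mcar M) \<and> (P \<notin> foulkes_basis A b \<longrightarrow> f P = mzero M)}"
  by (simp add: tensor_foulkes_def Let_def)

lemma tensor_madd: "madd (tensor_foulkes M A b) f f' P =
   (if P \<in> foulkes_basis A b then madd M (f P) (f' P) else mzero M)"
  by (simp add: tensor_foulkes_def Let_def)

lemma tensor_msmult: "msmult (tensor_foulkes M A b) c f P =
   (if P \<in> foulkes_basis A b then msmult M c (f P) else mzero M)"
  by (simp add: tensor_foulkes_def Let_def)

lemma tensor_mact: "mact (tensor_foulkes M A b) g f P =
   (if P \<in> foulkes_basis A b then mact M g (f (pimg (iv g) P)) else mzero M)"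
  by (simp add: tensor_foulkes_def Let_def)

context
  fixes p l N :: nat
  assumes pp: "prime p" and l1: "1 \<le> l" and lN: "l*p \<le> N"
begin

lemma Kc_subsp: "subsp (Kc A a G)"
  unfolding subsp_def using Kc_zero[OF pp l1 lN] Kc_add[OF pp l1 lN] Kc_smult[OF pp l1 lN] by blast

lemma act_fixed:
  assumes lM: "l*p \<le> M" and b: "bij g" and gM: "g ` {1..M} = {1..M}"
    and cj: "\<forall>h\<in>Rgrp p l. iv g \<circ> h \<circ> g \<in> Rgrp p l"
    and v: "(v :: nat set set \<Rightarrow> 'a::field) \<in> fixed_pts (foulkes {1..M} a) (Rgrp p l)"
  shows "(\<lambda>P. v (pimg (iv g) P)) \<in> fixed_pts (foulkes {1..M} a) (Rgrp p l)"
proof -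
  have vm: "v \<in> mcar (foulkes {1..M} a)" and vi: "\<forall>h\<in>Rgrp p l. \<forall>P. v (pimg h P) = v P"
    using v fixed_char[OF pp l1 lM] by auto
  have bi: "bij (iv g)" using b bij_imp_bij_inv by blast
  have iM: "iv g ` {1..M} = {1..M}" using iv_image2[OF b gM] .
  have "(\<lambda>P. v (pimg (iv g) P)) \<in> mcar (foulkes {1..M} a)"
    using vm basis_pimg_gen_iff[OF bi iM] unfolding mcar_foulkes by blast
  moreover have "\<forall>h\<in>Rgrp p l. \<forall>P. v (pimg (iv g) (pimg h P)) = v (pimg (iv g) P)"
  proof (intro ballI allI)
    fix h P assume h: "h \<in> Rgrp p l"
    have "iv g \<circ> h = (iv g \<circ> h \<circ> g) \<circ> iv g" using bij_iv[OF b] by (simp add: comp_assoc)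
    hence "pimg (iv g) (pimg h P) = pimg (iv g \<circ> h \<circ> g) (pimg (iv g) P)" by (metis pimg_comp)
    thus "v (pimg (iv g) (pimg h P)) = v (pimg (iv g) P)" using vi cj h by simp
  qed
  ultimately show ?thesis by (intro iffD2[OF fixed_char[OF pp l1 lM]] conjI) simp_all
qed

lemma act_Kc:
  assumes lM: "l*p \<le> M" and b: "bij g" and gM: "g ` {1..M} = {1..M}"
    and cj: "\<forall>h\<in>Rgrp p l. iv g \<circ> h \<circ> g \<in> Rgrp p l" and cj2: "\<forall>h\<in>Rgrp p l. g \<circ> h \<circ> iv g \<in> Rgrp p l"
    and v: "(v :: nat set set \<Rightarrow> 'a::field) \<in> Kc {1..M} a (Rgrp p l)"
  shows "(\<lambda>P. v (pimg (iv g) P)) \<in> Kc {1..M} a (Rgrp p l)"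
proof -
  have vf: "v \<in> fixed_pts (foulkes {1..M} a) (Rgrp p l)" and vz: "\<forall>P. fixP (Rgrp p l) P \<longrightarrow> v P = 0"
    using v unfolding Kc_def by auto
  have "fixP (Rgrp p l) (pimg (iv g) P)" if fx: "fixP (Rgrp p l) P" for P
    unfolding fixP_def
  proof
    fix h assume h: "h \<in> Rgrp p l"
    have "\<And>y. iv g (g y) = y" using inv_f_f[OF bij_is_inj[OF b]] .
    hence "h \<circ> iv g = iv g \<circ> (g \<circ> h \<circ> iv g)" by (simp add: fun_eq_iff)
    hence "pimg h (pimg (iv g) P) = pimg (iv g) (pimg (g \<circ> h \<circ> iv g) P)" by (metis pimg_comp)
    also have "\<dots> = pimg (iv g) P" using fx cj2 h unfolding fixP_def by simp
    finally show "pimg h (pimg (iv g) P) = pimg (iv g) P" .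
  qed
  thus ?thesis using act_fixed[OF lM b gM cj vf] vz unfolding Kc_def by simp
qed

end

definition res :: "nat set set set \<Rightarrow> (nat set set \<Rightarrow> 'a::field) \<Rightarrow> nat set set \<Rightarrow> nat set set \<Rightarrow> 'a" where
  "res B1 v P2 = (\<lambda>P1. if P1 \<in> B1 then v (P1 \<union> P2) else 0)"

lemma res_add: "res B1 (\<lambda>P. v P + w P) P2 = (\<lambda>P1. res B1 v P2 P1 + res B1 w P2 P1)"
  unfolding res_def by (rule ext) simp

lemma res_smult: "res B1 (\<lambda>P. c * v P) P2 = (\<lambda>P1. c * res B1 v P2 P1)"
  unfolding res_def by (rule ext) simp

lemma res_diff: "res B1 (\<lambda>P. v P - w P) P2 = (\<lambda>P1. res B1 v P2 P1 - res B1 w P2 P1)"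
  unfolding res_def by (rule ext) simp

definition Fm :: "nat set set set \<Rightarrow> nat set set set \<Rightarrow> (nat set set \<Rightarrow> 'a::field) set \<Rightarrow> (nat set set \<Rightarrow> 'a)
    \<Rightarrow> nat set set \<Rightarrow> (nat set set \<Rightarrow> 'a) set" where
  "Fm B1 B2 K v = (\<lambda>P2. if P2 \<in> B2 then cs K (res B1 v P2) else cs K (\<lambda>P. 0))"

context
  fixes p l N a :: nat
  assumes pp: "prime p" and l1: "1 \<le> l" and lN: "l*p \<le> N" and ap: "a < p"
begin

lemma blocks_C: "P2 \<in> foulkes_basis {l*p<..N} a \<Longrightarrow> \<forall>X\<in>P2. X \<subseteq> {l*p<..N}"
  unfolding foulkes_basis_def using partition_onD1 by blast

lemma blocks_S: "P1 \<in> foulkes_basis {1..l*p} a \<Longrightarrow> \<forall>X\<in>P1. X \<subseteq> {1..l*p}"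
  unfolding foulkes_basis_def using partition_onD1 by blast

lemma pimg_filterS: "h \<in> Rgrp p l \<Longrightarrow> pimg h {X\<in>x. X \<subseteq> {1..l*p}} = {Y\<in>pimg h x. Y \<subseteq> {1..l*p}}"
  unfolding pimg_def using Q_subS[OF pp l1 lN] by auto

lemma pimg_filterC: "h \<in> Rgrp p l \<Longrightarrow> pimg h {X\<in>x. X \<subseteq> {l*p<..N}} = {Y\<in>pimg h x. Y \<subseteq> {l*p<..N}}"
  unfolding pimg_def using Q_subC[OF pp l1 lN] by auto

lemma res_Fs:
  assumes v: "(v :: nat set set \<Rightarrow> 'a::field) \<in> fixed_pts (foulkes {1..N} a) (Rgrp p l)"
    and P2: "P2 \<in> foulkes_basis {l*p<..N} a"
  shows "res (foulkes_basis {1..l*p} a) v P2 \<in> fixed_pts (foulkes {1..l*p} a) (Rgrp p l)"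
proof -
  have vi: "\<forall>h\<in>Rgrp p l. \<forall>P. v (pimg h P) = v P" using v fixed_char[OF pp l1 lN] by blast
  have "res (foulkes_basis {1..l*p} a) v P2 \<in> mcar (foulkes {1..l*p} a)"
    unfolding mcar_foulkes res_def by simp
  moreover have "\<forall>h\<in>Rgrp p l. \<forall>P1. res (foulkes_basis {1..l*p} a) v P2 (pimg h P1) = res (foulkes_basis {1..l*p} a) v P2 P1"
  proof (intro ballI allI)
    fix h P1 assume h: "h \<in> Rgrp p l"
    have bi: "pimg h P1 \<in> foulkes_basis {1..l*p} a \<longleftrightarrow> P1 \<in> foulkes_basis {1..l*p} a"
      using basis_pimg_iff[OF Q_permutes[OF pp l1 h]] .
    have "pimg h P1 \<union> P2 = pimg h (P1 \<union> P2)"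
      using pimg_Un pimg_fixC[OF pp l1 lN h blocks_C[OF P2]] by metis
    hence "v (pimg h P1 \<union> P2) = v (P1 \<union> P2)" using vi h by simp
    thus "res (foulkes_basis {1..l*p} a) v P2 (pimg h P1) = res (foulkes_basis {1..l*p} a) v P2 P1"
      unfolding res_def using bi by simp
  qed
  ultimately show ?thesis by (intro iffD2[OF fixed_char[OF pp l1 le_refl]] conjI) simp_all
qed

lemma ker_char:
  assumes d: "(d :: nat set set \<Rightarrow> 'a::field) \<in> fixed_pts (foulkes {1..N} a) (Rgrp p l)"
  shows "d \<in> Kc {1..N} a (Rgrp p l) \<longleftrightarrow>
    (\<forall>P2\<in>foulkes_basis {l*p<..N} a. res (foulkes_basis {1..l*p} a) d P2 \<in> Kc {1..l*p} a (Rgrp p l))"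
proof
  assume dK: "d \<in> Kc {1..N} a (Rgrp p l)"
  hence dz: "\<forall>P. fixP (Rgrp p l) P \<longrightarrow> d P = 0" unfolding Kc_def by auto
  show "\<forall>P2\<in>foulkes_basis {l*p<..N} a. res (foulkes_basis {1..l*p} a) d P2 \<in> Kc {1..l*p} a (Rgrp p l)"
  proof
    fix P2 assume P2: "P2 \<in> foulkes_basis {l*p<..N} a"
    have "fixP (Rgrp p l) P1 \<longrightarrow> res (foulkes_basis {1..l*p} a) d P2 P1 = 0" for P1
    proof
      assume fx: "fixP (Rgrp p l) P1"
      have "fixP (Rgrp p l) (P1 \<union> P2)" unfolding fixP_def
      proof
        fix h assume h: "h \<in> Rgrp p l"
        show "pimg h (P1 \<union> P2) = P1 \<union> P2"
          using pimg_Un pimg_fixC[OF pp l1 lN h blocks_C[OF P2]] fx h unfolding fixP_def by metis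
      qed
      thus "res (foulkes_basis {1..l*p} a) d P2 P1 = 0" unfolding res_def using dz by simp
    qed
    thus "res (foulkes_basis {1..l*p} a) d P2 \<in> Kc {1..l*p} a (Rgrp p l)"
      unfolding Kc_def using res_Fs[OF d P2] by blast
  qed
next
  assume r: "\<forall>P2\<in>foulkes_basis {l*p<..N} a. res (foulkes_basis {1..l*p} a) d P2 \<in> Kc {1..l*p} a (Rgrp p l)"
  have dm: "d \<in> mcar (foulkes {1..N} a)" using d fixed_char[OF pp l1 lN] by blast
  have "d x = 0" if fx: "fixP (Rgrp p l) x" for x
  proof (cases "x \<in> foulkes_basis {1..N} a")
    case False thus ?thesis using dm unfolding mcar_foulkes by blast
  next
    case True
    have sp: "\<forall>X\<in>x. X \<subseteq> {1..l*p} \<or> X \<subseteq> {l*p<..N}"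
      using straddle[OF pp l1 lN True fx ap] by blast
    define P1 where "P1 = {X\<in>x. X \<subseteq> {1..l*p}}"
    define P2 where "P2 = {X\<in>x. X \<subseteq> {l*p<..N}}"
    have P1b: "P1 \<in> foulkes_basis {1..l*p} a" unfolding P1_def using split_decomp(1)[OF pp l1 lN True sp] .
    have P2b: "P2 \<in> foulkes_basis {l*p<..N} a" unfolding P2_def using split_decomp(2)[OF pp l1 lN True sp] .
    have xe: "x = P1 \<union> P2" unfolding P1_def P2_def using split_decomp(3)[OF pp l1 lN True sp] .
    have "fixP (Rgrp p l) P1" unfolding fixP_def
    proof
      fix h assume h: "h \<in> Rgrp p l"
      have "pimg h P1 = {Y\<in>pimg h x. Y \<subseteq> {1..l*p}}" unfolding P1_def using pimg_filterS[OF h] .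
      also have "\<dots> = P1" using fx h unfolding fixP_def P1_def by simp
      finally show "pimg h P1 = P1" .
    qed
    hence "res (foulkes_basis {1..l*p} a) d P2 P1 = 0" using r P2b unfolding Kc_def by blast
    thus ?thesis using P1b xe unfolding res_def by simp
  qed
  thus "d \<in> Kc {1..N} a (Rgrp p l)" unfolding Kc_def using d by blast
qed


lemma surj_constr:
  assumes f: "f \<in> mcar (tensor_foulkes (quot_mod (sub_mod (foulkes {1..l*p} a :: (nat set set \<Rightarrow> 'a::field, 'a) fmod)
      (fixed_pts (foulkes {1..l*p} a) (Rgrp p l))) (Kc {1..l*p} a (Rgrp p l))) {l*p<..N} a)"
  shows "\<exists>v \<in> fixed_pts (foulkes {1..N} a :: (nat set set \<Rightarrow> 'a, 'a) fmod) (Rgrp p l).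
     Fm (foulkes_basis {1..l*p} a) (foulkes_basis {l*p<..N} a) (Kc {1..l*p} a (Rgrp p l)) v = f"
proof -
  let ?Fs = "fixed_pts (foulkes {1..l*p} a :: (nat set set \<Rightarrow> 'a, 'a) fmod) (Rgrp p l)"
  let ?Ks = "Kc {1..l*p} a (Rgrp p l) :: (nat set set \<Rightarrow> 'a) set"
  let ?B1 = "foulkes_basis {1..l*p} a"
  let ?B2 = "foulkes_basis {l*p<..N} a"
  let ?S = "{1..l*p}"
  let ?C = "{l*p<..N}"
  have fB: "\<And>P2. P2 \<in> ?B2 \<Longrightarrow> f P2 \<in> cs ?Ks ` ?Fs"
    and fN: "\<And>P2. P2 \<notin> ?B2 \<Longrightarrow> f P2 = cs ?Ks (\<lambda>P. 0)"
    using f unfolding tensor_mcar quot_mcar quot_zero by auto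
  define u where "u P2 = (SOME u. u \<in> ?Fs \<and> f P2 = cs ?Ks u)" for P2
  have u: "u P2 \<in> ?Fs \<and> f P2 = cs ?Ks (u P2)" if "P2 \<in> ?B2" for P2
  proof -
    have "\<exists>u. u \<in> ?Fs \<and> f P2 = cs ?Ks u" using fB[OF that] by blast
    thus ?thesis unfolding u_def by (rule someI_ex)
  qed
  define good where "good P \<longleftrightarrow> P \<in> foulkes_basis {1..N} a \<and> (\<forall>X\<in>P. X \<subseteq> ?S \<or> X \<subseteq> ?C)" for P
  define v where "v P = (if good P then u {X\<in>P. X \<subseteq> ?C} {X\<in>P. X \<subseteq> ?S} else 0)" for P
  have vm: "v \<in> mcar (foulkes {1..N} a)" unfolding mcar_foulkes v_def good_def by simp
  have vi: "\<forall>h\<in>Rgrp p l. \<forall>P. v (pimg h P) = v P"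
  proof (intro ballI allI)
    fix h P assume h: "h \<in> Rgrp p l"
    have gi: "good (pimg h P) \<longleftrightarrow> good P"
    proof -
      have "pimg h P \<in> foulkes_basis {1..N} a \<longleftrightarrow> P \<in> foulkes_basis {1..N} a"
        using basis_pimg_iff[OF QN[OF pp l1 lN h]] .
      moreover have "(\<forall>Y\<in>pimg h P. Y \<subseteq> ?S \<or> Y \<subseteq> ?C) \<longleftrightarrow> (\<forall>X\<in>P. X \<subseteq> ?S \<or> X \<subseteq> ?C)"
        unfolding pimg_def using Q_subS[OF pp l1 lN h] Q_subC[OF pp l1 lN h] by auto
      ultimately show ?thesis unfolding good_def by simp
    qed
    show "v (pimg h P) = v P"
    proof (cases "good P")
      case False thus ?thesis using gi unfolding v_def by simp
    next
      case True
      have Pb: "P \<in> foulkes_basis {1..N} a" and sp: "\<forall>X\<in>P. X \<subseteq> ?S \<or> X \<subseteq> ?C"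
        using True unfolding good_def by auto
      have P2b: "{X\<in>P. X \<subseteq> ?C} \<in> ?B2" using split_decomp(2)[OF pp l1 lN Pb sp] .
      have "{Y\<in>pimg h P. Y \<subseteq> ?C} = pimg h {X\<in>P. X \<subseteq> ?C}" using pimg_filterC[OF h] by simp
      also have "\<dots> = {X\<in>P. X \<subseteq> ?C}" using pimg_fixC[OF pp l1 lN h blocks_C[OF P2b]] .
      finally have e2: "{Y\<in>pimg h P. Y \<subseteq> ?C} = {X\<in>P. X \<subseteq> ?C}" .
      have e1: "{Y\<in>pimg h P. Y \<subseteq> ?S} = pimg h {X\<in>P. X \<subseteq> ?S}" using pimg_filterS[OF h] by simp
      have uF: "u {X\<in>P. X \<subseteq> ?C} \<in> ?Fs" using u[OF P2b] by blast
      have "u {X\<in>P. X \<subseteq> ?C} (pimg h {X\<in>P. X \<subseteq> ?S}) = u {X\<in>P. X \<subseteq> ?C} {X\<in>P. X \<subseteq> ?S}"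
        using uF fixed_char[OF pp l1 le_refl] h by blast
      thus ?thesis using True gi e1 e2 unfolding v_def by simp
    qed
  qed
  have vF: "v \<in> fixed_pts (foulkes {1..N} a :: (nat set set \<Rightarrow> 'a, 'a) fmod) (Rgrp p l)"
    by (intro iffD2[OF fixed_char[OF pp l1 lN]] conjI vm vi)
  have "Fm ?B1 ?B2 ?Ks v = f"
  proof
    fix P2
    show "Fm ?B1 ?B2 ?Ks v P2 = f P2"
    proof (cases "P2 \<in> ?B2")
      case False thus ?thesis using fN unfolding Fm_def by simp
    next
      case True
      have "res ?B1 v P2 = u P2"
      proof
        fix P1
        show "res ?B1 v P2 P1 = u P2 P1"
        proof (cases "P1 \<in> ?B1")
          case False
          have "u P2 \<in> mcar (foulkes {1..l*p} a)" using u[OF True] fixed_char[OF pp l1 le_refl] by blast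
          thus ?thesis using False unfolding res_def mcar_foulkes by simp
        next
          case T1: True
          have g: "good (P1 \<union> P2)" unfolding good_def
            using split_union(1)[OF pp l1 lN T1 True] blocks_S[OF T1] blocks_C[OF True] by blast
          thus ?thesis unfolding res_def v_def using T1 split_union(2,3)[OF pp l1 lN T1 True] by simp
        qed
      qed
      thus ?thesis using True u[OF True] unfolding Fm_def by simp
    qed
  qed
  thus ?thesis using vF by blast
qed


lemma main_iso:
  assumes ch: "CHAR('a::field) = p"
  shows "mod_iso (normalizer_S N (Rgrp p l))
     (brauer_quot N (foulkes {1..N} a :: (nat set set \<Rightarrow> 'a, 'a) fmod) (Rgrp p l))
     (tensor_foulkes (brauer_quot (l*p) (foulkes {1..l*p} a :: (nat set set \<Rightarrow> 'a, 'a) fmod) (Rgrp p l)) {l*p<..N} a)"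
proof -
  let ?Fq = "fixed_pts (foulkes {1..N} a :: (nat set set \<Rightarrow> 'a, 'a) fmod) (Rgrp p l)"
  let ?Kb = "Kc {1..N} a (Rgrp p l) :: (nat set set \<Rightarrow> 'a) set"
  let ?Fs = "fixed_pts (foulkes {1..l*p} a :: (nat set set \<Rightarrow> 'a, 'a) fmod) (Rgrp p l)"
  let ?Ks = "Kc {1..l*p} a (Rgrp p l) :: (nat set set \<Rightarrow> 'a) set"
  let ?B1 = "foulkes_basis {1..l*p} a"
  let ?B2 = "foulkes_basis {l*p<..N} a"
  let ?S = "{1..l*p}"
  let ?C = "{l*p<..N}"
  let ?Msq = "quot_mod (sub_mod (foulkes {1..l*p} a :: (nat set set \<Rightarrow> 'a, 'a) fmod) ?Fs) ?Ks"
  let ?T = "tensor_foulkes ?Msq ?C a"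
  let ?F = "Fm ?B1 ?B2 ?Ks"
  have lpl: "l*p \<le> l*p" by simp
  have e1: "brauer_quot N (foulkes {1..N} a :: (nat set set \<Rightarrow> 'a, 'a) fmod) (Rgrp p l)
      = quot_mod (sub_mod (foulkes {1..N} a) ?Fq) ?Kb"
    unfolding brauer_quot_def using bker[OF pp l1 lN ch] by simp
  have e2: "brauer_quot (l*p) (foulkes {1..l*p} a :: (nat set set \<Rightarrow> 'a, 'a) fmod) (Rgrp p l) = ?Msq"
    unfolding brauer_quot_def using bker[OF pp l1 lpl ch] by simp
  have Ks: "subsp ?Ks" using Kc_subsp[OF pp l1 lpl] .
  have Kb: "subsp ?Kb" using Kc_subsp[OF pp l1 lN] .
  have Fqs: "subsp ?Fq" using fixed_subsp .
  have mz: "mzero ?Msq = cs ?Ks (\<lambda>P. 0)" using quot_zero .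
  have "mod_iso (normalizer_S N (Rgrp p l)) (quot_mod (sub_mod (foulkes {1..N} a) ?Fq) ?Kb) ?T"
  proof (rule quot_iso[where F = ?F])
    show "subsp ?Kb" using Kb .
    show "subsp ?Fq" using Fqs .
    show "?Kb \<subseteq> ?Fq" using Kc_sub .
  next
    fix v w assume v: "v \<in> ?Fq" and w: "w \<in> ?Fq"
    show "?F (\<lambda>P. v P + w P) = madd ?T (?F v) (?F w)"
    proof
      fix P2
      show "?F (\<lambda>P. v P + w P) P2 = madd ?T (?F v) (?F w) P2"
        unfolding tensor_madd Fm_def res_add using quot_add[OF Ks] mz by simp
    qed
  next
    fix v c assume v: "v \<in> ?Fq"
    show "?F (\<lambda>P. c * v P) = msmult ?T c (?F v)"
    proof
      fix P2
      show "?F (\<lambda>P. c * v P) P2 = msmult ?T c (?F v) P2"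
        unfolding tensor_msmult Fm_def res_smult using quot_smult[OF Ks] mz by simp
    qed
  next
    fix g v assume g: "g \<in> normalizer_S N (Rgrp p l)" and v: "v \<in> ?Fq"
    have gp: "g permutes {1..N}" using g unfolding normalizer_S_def by auto
    have b: "bij g" using permutes_bij[OF gp] .
    have cj: "\<forall>h\<in>Rgrp p l. iv g \<circ> h \<circ> g \<in> Rgrp p l" using norm_conj(2)[OF pp l1 lN g] by blast
    have cj2: "\<forall>h\<in>Rgrp p l. g \<circ> h \<circ> iv g \<in> Rgrp p l" using norm_conj(1)[OF pp l1 lN g] by blast
    show "(\<lambda>P. v (pimg (iv g) P)) \<in> ?Fq"
      using act_fixed[OF pp l1 lN lN b permutes_image[OF gp] cj v] .
    have bi: "bij (iv g)" using b bij_imp_bij_inv by blast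
    have iS: "iv g ` ?S = ?S" using iv_image2[OF b norm_S[OF pp l1 lN g]] .
    have iC: "iv g ` ?C = ?C" using iv_image2[OF b norm_C[OF pp l1 lN g]] .
    have gK: "\<forall>k\<in>?Ks. (\<lambda>P. k (pimg (iv g) P)) \<in> ?Ks"
      using act_Kc[OF pp l1 lN lpl b norm_S[OF pp l1 lN g] cj cj2] by blast
    show "?F (\<lambda>P. v (pimg (iv g) P)) = mact ?T g (?F v)"
    proof
      fix P2
      show "?F (\<lambda>P. v (pimg (iv g) P)) P2 = mact ?T g (?F v) P2"
      proof (cases "P2 \<in> ?B2")
        case False thus ?thesis unfolding tensor_mact Fm_def using mz by simp
      next
        case True
        define P2' where "P2' = pimg (iv g) P2"
        have P2'b: "P2' \<in> ?B2" unfolding P2'_def using basis_pimg_gen_iff[OF bi iC] True by blast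
        have "res ?B1 (\<lambda>P. v (pimg (iv g) P)) P2 = (\<lambda>P1. res ?B1 v P2' (pimg (iv g) P1))"
        proof
          fix P1
          have "pimg (iv g) P1 \<in> ?B1 \<longleftrightarrow> P1 \<in> ?B1" using basis_pimg_gen_iff[OF bi iS] .
          moreover have "pimg (iv g) (P1 \<union> P2) = pimg (iv g) P1 \<union> P2'" unfolding P2'_def by (rule pimg_Un)
          ultimately show "res ?B1 (\<lambda>P. v (pimg (iv g) P)) P2 P1 = res ?B1 v P2' (pimg (iv g) P1)"
            unfolding res_def by simp
        qed
        moreover have "mact ?Msq g (cs ?Ks (res ?B1 v P2')) = cs ?Ks (\<lambda>P1. res ?B1 v P2' (pimg (iv g) P1))"
          using quot_act[OF Ks gK] .
        ultimately show ?thesis unfolding tensor_mact Fm_def using True P2'b unfolding P2'_def by simp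
      qed
    qed
  next
    show "?F ` ?Fq = mcar ?T"
    proof
      show "?F ` ?Fq \<subseteq> mcar ?T"
      proof
        fix y assume "y \<in> ?F ` ?Fq"
        then obtain v where v: "v \<in> ?Fq" "y = ?F v" by blast
        have "\<forall>P. (P \<in> ?B2 \<longrightarrow> y P \<in> mcar ?Msq) \<and> (P \<notin> ?B2 \<longrightarrow> y P = mzero ?Msq)"
          using v res_Fs[OF v(1)] unfolding Fm_def quot_mcar mz by auto
        thus "y \<in> mcar ?T" unfolding tensor_mcar by simp
      qed
      show "mcar ?T \<subseteq> ?F ` ?Fq"
      proof
        fix f assume "f \<in> mcar ?T"
        then obtain v where "v \<in> ?Fq" "?F v = f" using surj_constr by blast
        thus "f \<in> ?F ` ?Fq" by blast
      qed
    qed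
  next
    fix v w assume v: "v \<in> ?Fq" and w: "w \<in> ?Fq"
    have d: "(\<lambda>P. v P - w P) \<in> ?Fq" using subsp_diff[OF Fqs v w] .
    have "?F v = ?F w \<longleftrightarrow> (\<forall>P2\<in>?B2. cs ?Ks (res ?B1 v P2) = cs ?Ks (res ?B1 w P2))"
      unfolding Fm_def fun_eq_iff by (auto split: if_splits)
    also have "\<dots> \<longleftrightarrow> (\<forall>P2\<in>?B2. res ?B1 (\<lambda>P. v P - w P) P2 \<in> ?Ks)"
      unfolding res_diff using cs_eq_iff[OF Ks] by simp
    also have "\<dots> \<longleftrightarrow> (\<lambda>P. v P - w P) \<in> ?Kb" using ker_char[OF d] by simp
    finally show "?F v = ?F w \<longleftrightarrow> (\<lambda>P. v P - w P) \<in> ?Kb" .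
  qed
  thus ?thesis using e1 e2 by simp
qed


lemma main_zero:
  assumes ch: "CHAR('a::field) = p" and a0: "0 < a" and nd: "\<not> a dvd l"
  shows "zero_module (brauer_quot N (foulkes {1..N} a :: (nat set set \<Rightarrow> 'a, 'a) fmod) (Rgrp p l))"
proof -
  let ?Fq = "fixed_pts (foulkes {1..N} a :: (nat set set \<Rightarrow> 'a, 'a) fmod) (Rgrp p l)"
  let ?Kb = "Kc {1..N} a (Rgrp p l) :: (nat set set \<Rightarrow> 'a) set"
  have e1: "brauer_quot N (foulkes {1..N} a :: (nat set set \<Rightarrow> 'a, 'a) fmod) (Rgrp p l)
      = quot_mod (sub_mod (foulkes {1..N} a) ?Fq) ?Kb"
    unfolding brauer_quot_def using bker[OF pp l1 lN ch] by simp
  have "?Fq \<subseteq> ?Kb"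
  proof
    fix v assume v: "v \<in> ?Fq"
    have vm: "v \<in> mcar (foulkes {1..N} a)" using v fixed_char[OF pp l1 lN] by blast
    have "v x = 0" if fx: "fixP (Rgrp p l) x" for x
    proof (cases "x \<in> foulkes_basis {1..N} a")
      case True
      have "a dvd l" using a_dvd_l[OF pp l1 lN True fx ap a0] .
      thus ?thesis using nd by simp
    next
      case False thus ?thesis using vm unfolding mcar_foulkes by blast
    qed
    thus "v \<in> ?Kb" unfolding Kc_def using v by blast
  qed
  hence "?Fq = ?Kb" using Kc_sub by blast
  thus ?thesis unfolding e1 using quot_zero_module[OF Kc_subsp[OF pp l1 lN]] by blast
qed

end

theorem lemma3p1:
  fixes p a n l :: nat
  assumes "Factorial_Ring.prime p" and "odd p" and "CHAR('a::field) = p"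
    and "a < p" and "p \<le> n" and "1 \<le> l" and "l * p \<le> a * n"
  shows "(\<forall>s. l = a * s \<longrightarrow>
           normalizer_S (a*n) (Rgrp p l)
             = {g1 \<circ> g2 | g1 g2. g1 \<in> normalizer_S (a*s*p) (Rgrp p l) \<and> g2 permutes {a*s*p<..a*n}}
         \<and> mod_iso (normalizer_S (a*n) (Rgrp p l))
             (brauer_quot (a*n) (H a n :: (nat set set \<Rightarrow> 'a, 'a) fmod) (Rgrp p l))
             (tensor_foulkes (brauer_quot (a*s*p) (H a (s*p) :: (nat set set \<Rightarrow> 'a, 'a) fmod) (Rgrp p l))
                {a*s*p<..a*n} a))
       \<and> (\<not> a dvd l \<longrightarrow>
           zero_module (brauer_quot (a*n) (H a n :: (nat set set \<Rightarrow> 'a, 'a) fmod) (Rgrp p l)))"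
proof (intro conjI allI impI)
  note pp = assms(1) and ch = assms(3) and ap = assms(4) and l1 = assms(6) and lN = assms(7)
  fix s assume ls: "l = a * s"
  have e1: "a*s*p = l*p" using ls by simp
  have e2: "a*(s*p) = l*p" using ls by simp
  show "normalizer_S (a*n) (Rgrp p l)
     = {g1 \<circ> g2 | g1 g2. g1 \<in> normalizer_S (a*s*p) (Rgrp p l) \<and> g2 permutes {a*s*p<..a*n}}"
    unfolding e1 using norm_eq[OF pp l1 lN] .
  show "mod_iso (normalizer_S (a*n) (Rgrp p l))
             (brauer_quot (a*n) (H a n :: (nat set set \<Rightarrow> 'a, 'a) fmod) (Rgrp p l))
             (tensor_foulkes (brauer_quot (a*s*p) (H a (s*p) :: (nat set set \<Rightarrow> 'a, 'a) fmod) (Rgrp p l))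
                {a*s*p<..a*n} a)"
    unfolding e1 e2 using main_iso[OF pp l1 lN ap ch] .
next
  note pp = assms(1) and ch = assms(3) and ap = assms(4) and l1 = assms(6) and lN = assms(7)
  assume nd: "\<not> a dvd l"
  have p1: "1 < p" using prime_gt_1_nat[OF pp] .
  have a0: "0 < a"
  proof (rule ccontr)
    assume "\<not> 0 < a"
    hence "a = 0" by simp
    hence "l * p = 0" using lN by simp
    thus False using l1 p1 by simp
  qed
  show "zero_module (brauer_quot (a*n) (H a n :: (nat set set \<Rightarrow> 'a, 'a) fmod) (Rgrp p l))"
    using main_zero[OF pp l1 lN ap ch a0 nd] .
qed

end
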